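(* Let $\mathfrak L=\mathbb V\oplus\mathbb W$ be a color gLt-algebra admitting a quasi-multiplicative basis $\mathfrak B=\{e_i\}_{i\in I}$ of $\mathbb W\neq0$ which is $\mu$-quasi-multiplicative. If $\mathfrak L$ is centerless (i.e. $\mathcal Z(\mathfrak L)=0$) and $\mathbb V$ is tight, then $\mathfrak L=\bigoplus_k\mathfrak J_k$ is the direct sum of the family of its minimal color gLt-ideals, each one admitting a $\mu$-quasi-multiplicative basis inherited by the one of $\mathfrak L$.
   Context: Let $\mathbb F$ be a field, $\mathbb G$ an abelian group, $n\ge 2$, and $\epsilon:\mathbb G\times\mathbb G\to\mathbb F\setminus\{0\}$ a bicharacter ($\epsilon(k,g+h)=\epsilon(k,g)\epsilon(k,h)$, $\epsilon(g+h,k)=\epsilon(g,k)\epsilon(h,k)$, $\epsilon(g,h)\epsilon(h,g)=1$). A graded $n$-ary algebra is a $\mathbb G$-graded vector space $\mathfrak L=\bigoplus_{g\in\mathbb G}\mathfrak L_g$ with an $n$-linear map $\langle\cdot,\dots,\cdot\rangle:\mathfrak L^n\to\mathfrak L$ such that $\langle\mathfrak L_{g_1},\dots,\mathfrak L_{g_n}\rangle\subset\mathfrak L_{g_1+\dots+g_n}$. For $\sigma\in\mathbb S_n$ write $\langle x_1,\dots,x_n\rangle_\sigma:=\langle x_{\sigma(1)},\dots,x_{\sigma(n)}\rangle$; for subsets $A_1,\dots,A_n$, $\langle A_1,\dots,A_n\rangle_\sigma$ denotes the linear span of all $\langle x_1,\dots,x_n\rangle_\sigma$ with $x_r\in A_r$.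 A color gLt-algebra is a graded $n$-ary algebra satisfying, for each $k=1,\dots,n$ and fixed scalars $\alpha^{\sigma_1,\sigma_2}_{i,j,k}\in\mathbb F$, the color version (each term on the right multiplied by the product of values of $\epsilon$ on the degrees of the homogeneous arguments transposed in passing from the left-hand order to the order of that term) of the identity $\langle y_1,\dots,y_{k-1},\langle x_1,\dots,x_n\rangle,y_k,\dots,y_{n-1}\rangle=\sum_{1\le i,j\le n,\,\sigma_1\in\mathbb S_n,\,\sigma_2\in\mathbb S_{n-1}}\alpha^{\sigma_1,\sigma_2}_{i,j,k}\langle x_{\sigma_1(1)},\dots,x_{\sigma_1(i-1)},\langle y_{\sigma_2(1)},\dots,y_{\sigma_2(j-1)},x_{\sigma_1(i)},y_{\sigma_2(j)},\dots,y_{\sigma_2(n-1)}\rangle,x_{\sigma_1(i+1)},\dots,x_{\sigma_1(n)}\rangle$. A $\mathbb G$-graded subspace $\mathcal I\subset\mathfrak L$ is a color gLt-ideal if $\langle\mathcal I,\mathfrak L,\dots,\mathfrak L\rangle_\sigma\subset\mathcal I$ for every $\sigma\in\mathbb S_n$. The center is $\mathcal Z(\mathfrak L):=\{x\in\mathfrak L:\langle x,\mathfrak L,\dots,\mathfrak L\rangle_\sigma=0\text{ for all }\sigma\in\mathbb S_n\}$. $\mathfrak L$ admits a quasi-multiplicative basis if $\mathfrak L=\mathbb V\oplus\mathbb W$ with $\mathbb V$, $\mathbb W\ne0$ graded subspaces and $\mathfrak B=\{e_i\}_{i\in I}$ a basis of homogeneous elements of $\mathbb W$ such that: (1) for $i_1,\dots,i_n\in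 I$, either $\langle e_{i_1},\dots,e_{i_n}\rangle\in\mathbb Fe_j$ for some $j\in I$ or $\langle e_{i_1},\dots,e_{i_n}\rangle\in\mathbb V$; (2) for $0<k<n$, $i_1,\dots,i_k\in I$ and $\sigma\in\mathbb S_n$, $\langle e_{i_1},\dots,e_{i_k},\mathbb V,\dots,\mathbb V\rangle_\sigma\subset\mathbb Fe_{j_\sigma}$ for some $j_\sigma\in I$; (3) either $\langle\mathbb V,\dots,\mathbb V\rangle\subset\mathbb Fe_j$ for some $j\in I$ or $\langle\mathbb V,\dots,\mathbb V\rangle\subset\mathbb V$. A color gLt-ideal $\mathfrak S$ admits a basis inherited by the one of $\mathfrak L$ if $\mathfrak S=\mathbb V_{\mathfrak S}\oplus\mathbb W_{\mathfrak S}$ with $\mathbb V_{\mathfrak S}$ a graded subspace of $\mathbb V$ and $0\ne\mathbb W_{\mathfrak S}$ a graded subspace of $\mathbb W$ admitting a subset $\mathfrak B'\subset\mathfrak B$ as a basis (then $\mathfrak S$ is itself a color gLt-algebra with quasi-multiplicative basis $\mathfrak B'$ of $\mathbb W_{\mathfrak S}$). A color gLt-algebra with a quasi-multiplicative basis is minimal if its only nonzero color gLt-ideal admitting a basis inherited by its own is itself; a minimal color gLt-ideal of $\mathfrak L$ is a color gLt-ideal with an inherited basis which, as such an algebra, is minimal. Index maps (defined for any such algebra, here written for $\mathfrak L$): let $v$ be a symbol not in $I$, $\mathfrak I:=I\,\dot\cup\,\{v\}$; for each $j\in\mathfrak I$ take a new symbol $\overline j$, $\overline I:=\{\overline i:i\in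 I\}$, $\overline{\mathfrak I}:=\overline I\,\dot\cup\,\{\overline v\}$; set $\overline{(\overline j)}:=j$. Put $u_j:=e_j$ for $j\in I$ and $u_v:=\mathbb V$. For $\sigma\in\mathbb S_n$ and $(j_1,\dots,j_n)\in\mathfrak I^n$ let $a_\sigma(j_1,\dots,j_n)=\{r\}$ if $r\in I$ and $0\ne\langle u_{j_1},\dots,u_{j_n}\rangle_\sigma\subset\mathbb Fe_r$, $=\{v\}$ if $0\ne\langle u_{j_1},\dots,u_{j_n}\rangle_\sigma\subset\mathbb V$, and $=\emptyset$ otherwise. For $j,j_2,\dots,j_n\in\mathfrak I$ let $b_\sigma(j,\overline j_2,\dots,\overline j_n):=\{x\in\mathfrak I: a_\sigma(x,j_2,\dots,j_n)=\{j\}\}$. Define $\mu$ on $(\mathfrak I\,\dot\cup\,\overline{\mathfrak I})\times(\mathfrak I^{n-1}\,\dot\cup\,\overline{\mathfrak I}^{n-1})$ with values subsets of $\mathfrak I$ by: $\mu(j,j_1,\dots,j_{n-1})=\bigcup_{\sigma\in\mathbb S_n}a_\sigma(j,j_1,\dots,j_{n-1})$ for $j,j_1,\dots,j_{n-1}\in\mathfrak I$; $\mu(j,\overline j_1,\dots,\overline j_{n-1})=\bigcup_{\sigma\in\mathbb S_n}b_\sigma(j,\overline j_1,\dots,\overline j_{n-1})$ for $j,j_1,\dots,j_{n-1}\in\mathfrak I$; $\mu(\overline j,j_1,\dots,j_{n-1})=\bigcup_{1\le k\le n-1,\ \sigma\in\mathbb S_n}b_\sigma(j_k,\overline j,\overline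 j_1,\dots,\overline j_{k-1},\overline j_{k+1},\dots,\overline j_{n-1})$ for $j,j_1,\dots,j_{n-1}\in\mathfrak I$; and $\mu(\overline j,\overline j_1,\dots,\overline j_{n-1})=\emptyset$. $\mathbb V$ is tight if $\mathbb V=\{0\}$ or $\mathbb V=\sum\{\mathbb F\langle e_{i_1},\dots,e_{i_n}\rangle: i_1,\dots,i_n\in I,\ \mu(i_1,\dots,i_n)=\{v\}\}$. The basis $\mathfrak B$ is $\mu$-quasi-multiplicative if whenever $i\in I$, $k_1\in\mathfrak I\,\dot\cup\,\overline{\mathfrak I}$ and $(k_2,\dots,k_n)\in\mathfrak I^{n-1}\,\dot\cup\,\overline{\mathfrak I}^{n-1}$ satisfy $i\in\mu(k_1,k_2,\dots,k_n)$, then $e_i\in\langle w_{k_1},\dots,w_{k_n}\rangle_\sigma$ (linear span) for some $\sigma\in\mathbb S_n$, where $w_k:=e_j$ if $k\in\{j,\overline j\}$ with $j\in I$, and $w_k:=\mathbb V$ if $k\in\{v,\overline v\}$. *)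

theory Defs
  imports Complex_Main "HOL-Combinatorics.Permutations"
begin

(* An n-ary product is a function mul :: 'v list \<Rightarrow> 'v applied to lists of length n.
   All positions / indices are 0-based. A permutation of {1..n} is a function
   \<sigma> permutes {..<n}. *)

definition bicharacter :: "('g::ab_group_add \<Rightarrow> 'g \<Rightarrow> 'f::field) \<Rightarrow> bool" where
  "bicharacter eps \<longleftrightarrow>
     (\<forall>g h. eps g h \<noteq> 0) \<and>
     (\<forall>k g h. eps k (g + h) = eps k g * eps k h) \<and>
     (\<forall>k g h. eps (g + h) k = eps g k * eps h k) \<and>
     (\<forall>g h. eps g h * eps h g = 1)"

definition line :: "('f \<Rightarrow> 'v \<Rightarrow> 'v) \<Rightarrow> 'v \<Rightarrow> 'v set" where
  "line scale e = {scale c e | c. True}"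

definition setsum :: "'v::ab_group_add set \<Rightarrow> 'v set \<Rightarrow> 'v set" where
  "setsum A B = {a + b | a b. a \<in> A \<and> b \<in> B}"

definition graded_space :: "('f::field \<Rightarrow> 'v::ab_group_add \<Rightarrow> 'v) \<Rightarrow> 'v set \<Rightarrow> ('g \<Rightarrow> 'v set) \<Rightarrow> bool" where
  "graded_space scale L Lg \<longleftrightarrow>
     (\<forall>g. module.subspace scale (Lg g) \<and> Lg g \<subseteq> L) \<and>
     L = module.span scale (\<Union>g. Lg g) \<and>
     (\<forall>S x. finite S \<longrightarrow> (\<forall>g\<in>S. x g \<in> Lg g) \<longrightarrow> sum x S = 0 \<longrightarrow> (\<forall>g\<in>S. x g = 0))"

definition graded_subspace :: "('f::field \<Rightarrow> 'v::ab_group_add \<Rightarrow> 'v) \<Rightarrow> ('g \<Rightarrow> 'v set) \<Rightarrow> 'v set \<Rightarrow> bool" where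
  "graded_subspace scale Lg U \<longleftrightarrow>
     module.subspace scale U \<and> U = module.span scale (\<Union>g. U \<inter> Lg g)"

definition graded_nary_algebra ::
  "('f::field \<Rightarrow> 'v::ab_group_add \<Rightarrow> 'v) \<Rightarrow> nat \<Rightarrow> ('v list \<Rightarrow> 'v) \<Rightarrow> 'v set \<Rightarrow> ('g::ab_group_add \<Rightarrow> 'v set) \<Rightarrow> bool" where
  "graded_nary_algebra scale n mul L Lg \<longleftrightarrow>
     graded_space scale L Lg \<and>
     (\<forall>xs. length xs = n \<longrightarrow> set xs \<subseteq> L \<longrightarrow> mul xs \<in> L) \<and>
     (\<forall>xs p a b c. length xs = n \<longrightarrow> set xs \<subseteq> L \<longrightarrow> p < n \<longrightarrow> a \<in> L \<longrightarrow> b \<in> L \<longrightarrow>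
         mul (xs[p := a + b]) = mul (xs[p := a]) + mul (xs[p := b]) \<and>
         mul (xs[p := scale c a]) = scale c (mul (xs[p := a]))) \<and>
     (\<forall>xs gs. length xs = n \<longrightarrow> (\<forall>r<n. xs ! r \<in> Lg (gs r)) \<longrightarrow>
         mul xs \<in> Lg (\<Sum>r<n. gs r))"

definition before :: "'a list \<Rightarrow> 'a \<Rightarrow> 'a \<Rightarrow> bool" where
  "before xs a b \<longleftrightarrow> (\<exists>p q. p < q \<and> q < length xs \<and> xs ! p = a \<and> xs ! q = b)"

definition color_sign :: "('g \<Rightarrow> 'g \<Rightarrow> 'f::field) \<Rightarrow> ('a \<Rightarrow> 'g) \<Rightarrow> 'a list \<Rightarrow> 'a list \<Rightarrow> 'f" where
  "color_sign eps deg ls rs =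
     (\<Prod>(a, b) \<in> {(a, b). before ls a b \<and> before rs b a}. eps (deg a) (deg b))"

(* Argument tags: Inl r = x_r, Inr r = y_r (0-based).  Outer insertion position k,
   inner term data i, j, \<sigma>1, \<sigma>2 (0-based). *)
definition gLt_lhs_order :: "nat \<Rightarrow> nat \<Rightarrow> (nat + nat) list" where
  "gLt_lhs_order n k = map Inr [0..<k] @ map Inl [0..<n] @ map Inr [k..<n - 1]"

definition gLt_rhs_order ::
  "nat \<Rightarrow> nat \<Rightarrow> nat \<Rightarrow> (nat \<Rightarrow> nat) \<Rightarrow> (nat \<Rightarrow> nat) \<Rightarrow> (nat + nat) list" where
  "gLt_rhs_order n i j \<sigma>1 \<sigma>2 =
     (let xp = map \<sigma>1 [0..<n]; yp = map \<sigma>2 [0..<n - 1] in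
      map Inl (take i xp) @ map Inr (take j yp) @ [Inl (xp ! i)] @
      map Inr (drop j yp) @ map Inl (drop (Suc i) xp))"

definition gLt_term ::
  "('v list \<Rightarrow> 'v) \<Rightarrow> nat \<Rightarrow> 'v list \<Rightarrow> 'v list \<Rightarrow> nat \<Rightarrow> nat \<Rightarrow> (nat \<Rightarrow> nat) \<Rightarrow> (nat \<Rightarrow> nat) \<Rightarrow> 'v" where
  "gLt_term mul n xs ys i j \<sigma>1 \<sigma>2 =
     (let xp = map (\<lambda>p. xs ! \<sigma>1 p) [0..<n]; yp = map (\<lambda>p. ys ! \<sigma>2 p) [0..<n - 1];
          inner = mul (take j yp @ [xp ! i] @ drop j yp) in
      mul (take i xp @ [inner] @ drop (Suc i) xp))"

definition color_gLt_algebra ::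
  "('f::field \<Rightarrow> 'v::ab_group_add \<Rightarrow> 'v) \<Rightarrow> nat \<Rightarrow> ('v list \<Rightarrow> 'v) \<Rightarrow> ('g::ab_group_add \<Rightarrow> 'g \<Rightarrow> 'f)
    \<Rightarrow> 'v set \<Rightarrow> ('g \<Rightarrow> 'v set) \<Rightarrow> bool" where
  "color_gLt_algebra scale n mul eps L Lg \<longleftrightarrow>
     graded_nary_algebra scale n mul L Lg \<and>
     (\<exists>\<alpha> :: nat \<Rightarrow> nat \<Rightarrow> nat \<Rightarrow> (nat \<Rightarrow> nat) \<Rightarrow> (nat \<Rightarrow> nat) \<Rightarrow> 'f.
        \<forall>k<n. \<forall>xs ys gx gy.
          length xs = n \<longrightarrow> length ys = n - 1 \<longrightarrow>
          (\<forall>r<n. xs ! r \<in> Lg (gx r)) \<longrightarrow> (\<forall>r<n - 1. ys ! r \<in> Lg (gy r)) \<longrightarrow>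
          mul (take k ys @ [mul xs] @ drop k ys) =
          (\<Sum>i<n. \<Sum>j<n. \<Sum>\<sigma>1\<in>{\<sigma>. \<sigma> permutes {..<n}}. \<Sum>\<sigma>2\<in>{\<sigma>. \<sigma> permutes {..<n - 1}}.
             scale (\<alpha> i j k \<sigma>1 \<sigma>2 *
                    color_sign eps (case_sum gx gy) (gLt_lhs_order n k) (gLt_rhs_order n i j \<sigma>1 \<sigma>2))
                   (gLt_term mul n xs ys i j \<sigma>1 \<sigma>2)))"

definition gen_prod ::
  "('f::field \<Rightarrow> 'v::ab_group_add \<Rightarrow> 'v) \<Rightarrow> nat \<Rightarrow> ('v list \<Rightarrow> 'v) \<Rightarrow> (nat \<Rightarrow> nat) \<Rightarrow> 'v set list \<Rightarrow> 'v set" where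
  "gen_prod scale n mul \<sigma> As = module.span scale
     {mul (map (\<lambda>p. xs ! \<sigma> p) [0..<n]) | xs. length xs = n \<and> (\<forall>r<n. xs ! r \<in> As ! r)}"

definition center ::
  "('f::field \<Rightarrow> 'v::ab_group_add \<Rightarrow> 'v) \<Rightarrow> nat \<Rightarrow> ('v list \<Rightarrow> 'v) \<Rightarrow> 'v set \<Rightarrow> 'v set" where
  "center scale n mul L = {x \<in> L. \<forall>\<sigma>. \<sigma> permutes {..<n} \<longrightarrow>
      gen_prod scale n mul \<sigma> ({x} # replicate (n - 1) L) = {0}}"

definition gLt_ideal ::
  "('f::field \<Rightarrow> 'v::ab_group_add \<Rightarrow> 'v) \<Rightarrow> nat \<Rightarrow> ('v list \<Rightarrow> 'v) \<Rightarrow> 'v set \<Rightarrow> ('g \<Rightarrow> 'v set) \<Rightarrow> 'v set \<Rightarrow> bool" where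
  "gLt_ideal scale n mul L Lg I \<longleftrightarrow>
     I \<subseteq> L \<and> graded_subspace scale Lg I \<and>
     (\<forall>\<sigma>. \<sigma> permutes {..<n} \<longrightarrow> gen_prod scale n mul \<sigma> (I # replicate (n - 1) L) \<subseteq> I)"

definition quasi_mult_basis ::
  "('f::field \<Rightarrow> 'v::ab_group_add \<Rightarrow> 'v) \<Rightarrow> nat \<Rightarrow> ('v list \<Rightarrow> 'v) \<Rightarrow> 'v set \<Rightarrow> ('g \<Rightarrow> 'v set)
    \<Rightarrow> 'v set \<Rightarrow> 'v set \<Rightarrow> bool" where
  "quasi_mult_basis scale n mul L Lg V B \<longleftrightarrow>
     V \<subseteq> L \<and> graded_subspace scale Lg V \<and>
     B \<subseteq> L \<and> B \<noteq> {} \<and> \<not> module.dependent scale B \<and> (\<forall>e\<in>B. \<exists>g. e \<in> Lg g) \<and>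
     L = setsum V (module.span scale B) \<and> V \<inter> module.span scale B = {0} \<and>
     (\<forall>es. length es = n \<longrightarrow> set es \<subseteq> B \<longrightarrow>
         (\<exists>e\<in>B. mul es \<in> line scale e) \<or> mul es \<in> V) \<and>
     (\<forall>k es \<sigma>. 0 < k \<longrightarrow> k < n \<longrightarrow> length es = k \<longrightarrow> set es \<subseteq> B \<longrightarrow> \<sigma> permutes {..<n} \<longrightarrow>
         (\<exists>e\<in>B. gen_prod scale n mul \<sigma> (map (\<lambda>x. {x}) es @ replicate (n - k) V) \<subseteq> line scale e)) \<and>
     ((\<exists>e\<in>B. gen_prod scale n mul id (replicate n V) \<subseteq> line scale e) \<or>
      gen_prod scale n mul id (replicate n V) \<subseteq> V)"

(* Index maps. Indices: Some e (e \<in> B) for the basis element e, None for the symbol v.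
   A bar on an index is recorded by a boolean flag (True = barred). *)
definition idx_set :: "'v set \<Rightarrow> 'v option set" where
  "idx_set B = Some ` B \<union> {None}"

definition u_of :: "'v set \<Rightarrow> 'v option \<Rightarrow> 'v set" where
  "u_of V j = (case j of Some e \<Rightarrow> {e} | None \<Rightarrow> V)"

definition a_map ::
  "('f::field \<Rightarrow> 'v::ab_group_add \<Rightarrow> 'v) \<Rightarrow> nat \<Rightarrow> ('v list \<Rightarrow> 'v) \<Rightarrow> 'v set \<Rightarrow> 'v set
    \<Rightarrow> (nat \<Rightarrow> nat) \<Rightarrow> 'v option list \<Rightarrow> 'v option set" where
  "a_map scale n mul V B \<sigma> js =
     (let P = gen_prod scale n mul \<sigma> (map (u_of V) js) in
      {Some r | r. r \<in> B \<and> P \<noteq> {0} \<and> P \<subseteq> line scale r} \<union>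
      {None | x::unit. P \<noteq> {0} \<and> P \<subseteq> V})"

definition b_map ::
  "('f::field \<Rightarrow> 'v::ab_group_add \<Rightarrow> 'v) \<Rightarrow> nat \<Rightarrow> ('v list \<Rightarrow> 'v) \<Rightarrow> 'v set \<Rightarrow> 'v set
    \<Rightarrow> (nat \<Rightarrow> nat) \<Rightarrow> 'v option \<Rightarrow> 'v option list \<Rightarrow> 'v option set" where
  "b_map scale n mul V B \<sigma> j js =
     {x \<in> idx_set B. a_map scale n mul V B \<sigma> (x # js) = {j}}"

(* mu scale n mul V B b1 j b2 js  =  \<mu>(k_1, k_2, ..., k_n) where k_1 = j (barred iff b1)
   and (k_2,...,k_n) = js (all barred iff b2) *)
definition mu_map ::
  "('f::field \<Rightarrow> 'v::ab_group_add \<Rightarrow> 'v) \<Rightarrow> nat \<Rightarrow> ('v list \<Rightarrow> 'v) \<Rightarrow> 'v set \<Rightarrow> 'v set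
    \<Rightarrow> bool \<Rightarrow> 'v option \<Rightarrow> bool \<Rightarrow> 'v option list \<Rightarrow> 'v option set" where
  "mu_map scale n mul V B b1 j b2 js =
     (if \<not> b1 \<and> \<not> b2 then
        (\<Union>\<sigma>\<in>{\<sigma>. \<sigma> permutes {..<n}}. a_map scale n mul V B \<sigma> (j # js))
      else if \<not> b1 \<and> b2 then
        (\<Union>\<sigma>\<in>{\<sigma>. \<sigma> permutes {..<n}}. b_map scale n mul V B \<sigma> j js)
      else if b1 \<and> \<not> b2 then
        (\<Union>k<n - 1. \<Union>\<sigma>\<in>{\<sigma>. \<sigma> permutes {..<n}}.
            b_map scale n mul V B \<sigma> (js ! k) (j # take k js @ drop (Suc k) js))
      else {})"

definition tight ::
  "('f::field \<Rightarrow> 'v::ab_group_add \<Rightarrow> 'v) \<Rightarrow> nat \<Rightarrow> ('v list \<Rightarrow> 'v) \<Rightarrow> 'v set \<Rightarrow> 'v set \<Rightarrow> bool" where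
  "tight scale n mul V B \<longleftrightarrow>
     V = {0} \<or>
     V = module.span scale {mul es | es. length es = n \<and> set es \<subseteq> B \<and>
            mu_map scale n mul V B False (Some (hd es)) False (map Some (tl es)) = {None}}"

definition mu_quasi_mult ::
  "('f::field \<Rightarrow> 'v::ab_group_add \<Rightarrow> 'v) \<Rightarrow> nat \<Rightarrow> ('v list \<Rightarrow> 'v) \<Rightarrow> 'v set \<Rightarrow> 'v set \<Rightarrow> bool" where
  "mu_quasi_mult scale n mul V B \<longleftrightarrow>
     (\<forall>e\<in>B. \<forall>b1 k1 b2 ks. k1 \<in> idx_set B \<longrightarrow> set ks \<subseteq> idx_set B \<longrightarrow> length ks = n - 1 \<longrightarrow>
        Some e \<in> mu_map scale n mul V B b1 k1 b2 ks \<longrightarrow>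
        (\<exists>\<sigma>. \<sigma> permutes {..<n} \<and> e \<in> gen_prod scale n mul \<sigma> (map (u_of V) (k1 # ks))))"

definition inherited_basis ::
  "('f::field \<Rightarrow> 'v::ab_group_add \<Rightarrow> 'v) \<Rightarrow> ('g \<Rightarrow> 'v set) \<Rightarrow> 'v set \<Rightarrow> 'v set
    \<Rightarrow> 'v set \<Rightarrow> 'v set \<Rightarrow> 'v set \<Rightarrow> bool" where
  "inherited_basis scale Lg V B S VS BS \<longleftrightarrow>
     VS \<subseteq> V \<and> graded_subspace scale Lg VS \<and> BS \<subseteq> B \<and> BS \<noteq> {} \<and>
     VS \<inter> module.span scale BS = {0} \<and> S = setsum VS (module.span scale BS)"

definition minimal_alg ::
  "('f::field \<Rightarrow> 'v::ab_group_add \<Rightarrow> 'v) \<Rightarrow> nat \<Rightarrow> ('v list \<Rightarrow> 'v) \<Rightarrow> 'v set \<Rightarrow> ('g \<Rightarrow> 'v set)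
    \<Rightarrow> 'v set \<Rightarrow> 'v set \<Rightarrow> bool" where
  "minimal_alg scale n mul L Lg V B \<longleftrightarrow>
     (\<forall>I VI BI. I \<noteq> {0} \<longrightarrow> gLt_ideal scale n mul L Lg I \<longrightarrow> inherited_basis scale Lg V B I VI BI \<longrightarrow> I = L)"

definition is_direct_sum ::
  "('f::field \<Rightarrow> 'v::ab_group_add \<Rightarrow> 'v) \<Rightarrow> 'v set \<Rightarrow> ('v set \<times> 'b) set \<Rightarrow> bool" where
  "is_direct_sum scale L Fam \<longleftrightarrow>
     L = module.span scale (\<Union>t\<in>Fam. fst t) \<and>
     (\<forall>T x. finite T \<longrightarrow> T \<subseteq> Fam \<longrightarrow> (\<forall>t\<in>T. x t \<in> fst t) \<longrightarrow> sum x T = 0 \<longrightarrow> (\<forall>t\<in>T. x t = 0))"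

end

theory Submission
  imports Defs
begin

locale thm44 = vector_space scale for scale :: "'f::field \<Rightarrow> 'v::ab_group_add \<Rightarrow> 'v" (infixr \<open>*s\<close> 75) +
  fixes n :: nat and mul :: "'v list \<Rightarrow> 'v" and eps :: "'g::ab_group_add \<Rightarrow> 'g \<Rightarrow> 'f"
    and L V B :: "'v set" and Lg :: "'g \<Rightarrow> 'v set"
  assumes n2: "n \<ge> 2"
    and alg: "color_gLt_algebra scale n mul eps L Lg"
    and qmb: "quasi_mult_basis scale n mul L Lg V B"
    and muq: "mu_quasi_mult scale n mul V B"
    and cent: "center scale n mul L = {0}"
    and tgt: "tight scale n mul V B"
begin

abbreviation gp where "gp \<equiv> gen_prod scale n mul"

lemma galg: "graded_nary_algebra scale n mul L Lg"
  using alg by (simp add: color_gLt_algebra_def)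

lemma Lspan: "L = span (\<Union>g. Lg g)" and Lg_sub: "Lg g \<subseteq> L" and Lg_subspace: "subspace (Lg g)"
  using galg by (auto simp: graded_nary_algebra_def graded_space_def)

lemma L_subspace: "subspace L"
  by (metis Lspan subspace_span)

lemma mul_L: "length xs = n \<Longrightarrow> set xs \<subseteq> L \<Longrightarrow> mul xs \<in> L"
  using galg by (auto simp: graded_nary_algebra_def)

lemma mul_add: "length xs = n \<Longrightarrow> set xs \<subseteq> L \<Longrightarrow> p < n \<Longrightarrow> a \<in> L \<Longrightarrow> b \<in> L \<Longrightarrow>
    mul (xs[p := a + b]) = mul (xs[p := a]) + mul (xs[p := b])"
  using galg unfolding graded_nary_algebra_def by blast

lemma mul_scale: "length xs = n \<Longrightarrow> set xs \<subseteq> L \<Longrightarrow> p < n \<Longrightarrow> a \<in> L \<Longrightarrow>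
    mul (xs[p := c *s a]) = c *s (mul (xs[p := a]))"
  using galg unfolding graded_nary_algebra_def by blast

lemma mul_hom: "length xs = n \<Longrightarrow> (\<forall>r<n. xs ! r \<in> Lg (gs r)) \<Longrightarrow> mul xs \<in> Lg (\<Sum>r<n. gs r)"
  using galg unfolding graded_nary_algebra_def by blast

lemma mul_zero: assumes "length xs = n" "set xs \<subseteq> L" "p < n" shows "mul (xs[p := 0]) = 0"
proof -
  have "0 \<in> L" using L_subspace subspace_0 by blast
  from mul_add[OF assms this this] show ?thesis by simp
qed

lemma mul_zero': assumes "length xs = n" "set xs \<subseteq> L" "p < n" "xs ! p = 0" shows "mul xs = 0"
  using mul_zero[OF assms(1-3)] assms(4) by (metis list_update_id)

lemma V_L: "V \<subseteq> L"
  using qmb unfolding quasi_mult_basis_def by (elim conjE) assumption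

lemma V_graded: "graded_subspace scale Lg V"
  using qmb unfolding quasi_mult_basis_def by (elim conjE) assumption

lemma B_L: "B \<subseteq> L"
  using qmb unfolding quasi_mult_basis_def by (elim conjE) assumption

lemma B_ne: "B \<noteq> {}"
  using qmb unfolding quasi_mult_basis_def by (elim conjE) assumption

lemma B_ind: "independent B"
  using qmb unfolding quasi_mult_basis_def by (elim conjE) assumption

lemma B_hom: "\<forall>e\<in>B. \<exists>g. e \<in> Lg g"
  using qmb unfolding quasi_mult_basis_def by (elim conjE) assumption

lemma L_dec: "L = setsum V (span B)"
  using qmb unfolding quasi_mult_basis_def by (elim conjE) assumption

lemma VB0: "V \<inter> span B = {0}"
  using qmb unfolding quasi_mult_basis_def by (elim conjE) assumption

lemma cond1: "\<forall>es. length es = n \<longrightarrow> set es \<subseteq> B \<longrightarrow> (\<exists>e\<in>B. mul es \<in> line scale e) \<or> mul es \<in> V"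
  using qmb unfolding quasi_mult_basis_def by (elim conjE) assumption

lemma cond2: "\<forall>k es \<sigma>. 0 < k \<longrightarrow> k < n \<longrightarrow> length es = k \<longrightarrow> set es \<subseteq> B \<longrightarrow> \<sigma> permutes {..<n} \<longrightarrow> (\<exists>e\<in>B. gp \<sigma> (map (\<lambda>x. {x}) es @ replicate (n - k) V) \<subseteq> line scale e)"
  using qmb unfolding quasi_mult_basis_def by (elim conjE) assumption

lemma cond3: "(\<exists>e\<in>B. gp id (replicate n V) \<subseteq> line scale e) \<or> gp id (replicate n V) \<subseteq> V"
  using qmb unfolding quasi_mult_basis_def by (elim conjE) assumption

lemma V_subspace: "subspace V"
  using V_graded by (simp add: graded_subspace_def)

lemma zero_notin_B: "0 \<notin> B"
  using B_ind dependent_zero by blast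

lemma line_span: "line scale e = span {e}"
  by (auto simp: line_def span_singleton)

lemma line_subspace: "subspace (line scale e)"
  by (simp add: line_span)

lemma GP: assumes "\<sigma> permutes {..<n}"
  shows "gp \<sigma> As = span {mul zs | zs. length zs = n \<and> (\<forall>p<n. zs ! p \<in> As ! (\<sigma> p))}"
proof -
  have "{mul (map (\<lambda>p. xs ! \<sigma> p) [0..<n]) | xs. length xs = n \<and> (\<forall>r<n. xs ! r \<in> As ! r)}
     = {mul zs | zs. length zs = n \<and> (\<forall>p<n. zs ! p \<in> As ! (\<sigma> p))}" (is "?A = ?B")
  proof
    show "?A \<subseteq> ?B"
    proof
      fix y assume "y \<in> ?A"
      then obtain xs where xs: "length xs = n" "\<forall>r<n. xs ! r \<in> As ! r" "y = mul (map (\<lambda>p. xs ! \<sigma> p) [0..<n])" by blast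
      have "\<forall>p<n. map (\<lambda>p. xs ! \<sigma> p) [0..<n] ! p \<in> As ! (\<sigma> p)"
        using xs(2) permutes_in_image[OF assms] by auto
      moreover have "length (map (\<lambda>p. xs ! \<sigma> p) [0..<n]) = n" by simp
      ultimately show "y \<in> ?B" using xs(3) by blast
    qed
    show "?B \<subseteq> ?A"
    proof
      fix y assume "y \<in> ?B"
      then obtain zs where zs: "length zs = n" "\<forall>p<n. zs ! p \<in> As ! (\<sigma> p)" "y = mul zs" by blast
      define xs where "xs = map (\<lambda>r. zs ! inv \<sigma> r) [0..<n]"
      have inv_in: "r < n \<Longrightarrow> inv \<sigma> r < n" for r
        using permutes_in_image[OF permutes_inv[OF assms]] by auto
      have 1: "\<forall>r<n. xs ! r \<in> As ! r"
      proof (intro allI impI)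
        fix r assume r: "r < n"
        have "xs ! r = zs ! inv \<sigma> r" using r by (simp add: xs_def)
        also have "\<dots> \<in> As ! (\<sigma> (inv \<sigma> r))" using zs(2) inv_in[OF r] by blast
        also have "\<sigma> (inv \<sigma> r) = r" using permutes_inverses(1)[OF assms] by simp
        finally show "xs ! r \<in> As ! r" .
      qed
      have 2: "map (\<lambda>p. xs ! \<sigma> p) [0..<n] = zs"
      proof (rule nth_equalityI)
        show "length (map (\<lambda>p. xs ! \<sigma> p) [0..<n]) = length zs" using zs(1) by simp
        fix i assume "i < length (map (\<lambda>p. xs ! \<sigma> p) [0..<n])"
        then have i: "i < n" by simp
        have si: "\<sigma> i < n" using permutes_in_image[OF assms] i by simp
        have "map (\<lambda>p. xs ! \<sigma> p) [0..<n] ! i = xs ! \<sigma> i" using i by simp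
        also have "\<dots> = zs ! inv \<sigma> (\<sigma> i)" using si by (simp add: xs_def)
        also have "inv \<sigma> (\<sigma> i) = i" using permutes_inverses(2)[OF assms] by simp
        finally show "map (\<lambda>p. xs ! \<sigma> p) [0..<n] ! i = zs ! i" .
      qed
      have "length xs = n" by (simp add: xs_def)
      then show "y \<in> ?A" using 1 2 zs(3) by blast
    qed
  qed
  then show ?thesis by (simp add: gen_prod_def)
qed

lemma GP_mem: assumes "\<sigma> permutes {..<n}" "length zs = n" "\<forall>p<n. zs ! p \<in> As ! (\<sigma> p)"
  shows "mul zs \<in> gp \<sigma> As"
proof -
  have "mul zs \<in> {mul zs | zs. length zs = n \<and> (\<forall>p<n. zs ! p \<in> As ! (\<sigma> p))}" using assms(2,3) by blast
  then show ?thesis unfolding GP[OF assms(1)] by (rule span_base)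
qed

lemma GP_sub: assumes "\<sigma> permutes {..<n}" "subspace T"
  "\<And>zs. length zs = n \<Longrightarrow> \<forall>p<n. zs ! p \<in> As ! (\<sigma> p) \<Longrightarrow> mul zs \<in> T"
  shows "gp \<sigma> As \<subseteq> T"
  unfolding GP[OF assms(1)] using assms(2,3) by (intro span_minimal) auto

lemma GP_eq: assumes "\<sigma> permutes {..<n}" "\<tau> permutes {..<n}" "\<forall>p<n. As ! (\<sigma> p) = As' ! (\<tau> p)"
  shows "gp \<sigma> As = gp \<tau> As'"
proof -
  have "{mul zs | zs. length zs = n \<and> (\<forall>p<n. zs ! p \<in> As ! (\<sigma> p))} = {mul zs | zs. length zs = n \<and> (\<forall>p<n. zs ! p \<in> As' ! (\<tau> p))}"
    using assms(3) by auto
  then show ?thesis unfolding GP[OF assms(1)] GP[OF assms(2)] by simp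
qed

end

context thm44 begin

lemma subspace_preimage_mul:
  assumes T: "subspace T" and ys: "length ys = n" "set ys \<subseteq> L" and q: "q < n"
  shows "subspace {a. a \<in> L \<and> mul (ys[q := a]) \<in> T}"
proof (rule subspaceI)
  show "0 \<in> {a. a \<in> L \<and> mul (ys[q := a]) \<in> T}"
    using mul_zero[OF ys q] subspace_0[OF T] subspace_0[OF L_subspace] by simp
next
  fix x y assume "x \<in> {a. a \<in> L \<and> mul (ys[q := a]) \<in> T}" "y \<in> {a. a \<in> L \<and> mul (ys[q := a]) \<in> T}"
  then show "x + y \<in> {a. a \<in> L \<and> mul (ys[q := a]) \<in> T}"
    using mul_add[OF ys q, of x y] subspace_add[OF T] subspace_add[OF L_subspace] by simp
next
  fix c x assume "x \<in> {a. a \<in> L \<and> mul (ys[q := a]) \<in> T}"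
  then show "c *s x \<in> {a. a \<in> L \<and> mul (ys[q := a]) \<in> T}"
    using mul_scale[OF ys q, of x c] subspace_scale[OF T] subspace_scale[OF L_subspace] by simp
qed

lemma set_upd_L: "set ys \<subseteq> L \<Longrightarrow> a \<in> L \<Longrightarrow> set (ys[q := a]) \<subseteq> L"
  by (meson dual_order.trans insert_subset set_update_subset_insert)

lemma MR_aux:
  assumes T: "subspace T" and G: "G \<subseteq> L" and fin: "finite Q"
  shows "Q \<subseteq> {..<n} \<Longrightarrow> length xs = n \<Longrightarrow> set xs \<subseteq> L \<Longrightarrow> (\<forall>r\<in>Q. xs ! r \<in> span G) \<Longrightarrow>
    (\<forall>ys. length ys = n \<longrightarrow> set ys \<subseteq> L \<longrightarrow> (\<forall>r<n. r \<notin> Q \<longrightarrow> ys ! r = xs ! r) \<longrightarrow> (\<forall>r\<in>Q. ys ! r \<in> G) \<longrightarrow> mul ys \<in> T)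
    \<Longrightarrow> mul xs \<in> T"
  using fin
proof (induction Q arbitrary: xs rule: finite_induct)
  case empty
  then show ?case by auto
next
  case (insert q Q)
  have q: "q < n" using insert.prems(1) by auto
  show ?case
  proof (rule insert.IH)
    show "Q \<subseteq> {..<n}" "length xs = n" "set xs \<subseteq> L" "\<forall>r\<in>Q. xs ! r \<in> span G"
      using insert.prems by auto
    show "\<forall>ys. length ys = n \<longrightarrow> set ys \<subseteq> L \<longrightarrow> (\<forall>r<n. r \<notin> Q \<longrightarrow> ys ! r = xs ! r) \<longrightarrow> (\<forall>r\<in>Q. ys ! r \<in> G) \<longrightarrow> mul ys \<in> T"
    proof (intro allI impI)
      fix ys assume ys: "length ys = n" "set ys \<subseteq> L" "\<forall>r<n. r \<notin> Q \<longrightarrow> ys ! r = xs ! r" "\<forall>r\<in>Q. ys ! r \<in> G"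
      have yq: "ys ! q = xs ! q" using ys(3) q insert.hyps(2) by auto
      have "ys ! q \<in> span G" using yq insert.prems(4) by auto
      then have "ys ! q \<in> {a. a \<in> L \<and> mul (ys[q := a]) \<in> T}"
      proof (rule span_subspace_induct)
        show "subspace {a. a \<in> L \<and> mul (ys[q := a]) \<in> T}"
          by (rule subspace_preimage_mul[OF T ys(1,2) q])
        fix a assume a: "a \<in> G"
        have aL: "a \<in> L" using a G by auto
        have h1: "length (ys[q := a]) = n" using ys by simp
        have h2: "set (ys[q := a]) \<subseteq> L" using set_upd_L[OF ys(2) aL] .
        have h3: "\<forall>r<n. r \<notin> insert q Q \<longrightarrow> ys[q := a] ! r = xs ! r" using ys(3) by auto
        have h4: "\<forall>r\<in>insert q Q. ys[q := a] ! r \<in> G" using ys(1,4) a q by (auto simp: nth_list_update)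
        have "mul (ys[q := a]) \<in> T" using insert.prems(5) h1 h2 h3 h4 by blast
        then show "a \<in> {a. a \<in> L \<and> mul (ys[q := a]) \<in> T}" using a G by auto
      qed
      then show "mul ys \<in> T" by simp
    qed
  qed
qed

lemma MR:
  assumes "subspace T" "G \<subseteq> L" "Q \<subseteq> {..<n}" "length xs = n" "set xs \<subseteq> L" "\<forall>r\<in>Q. xs ! r \<in> span G"
    "\<And>ys. length ys = n \<Longrightarrow> set ys \<subseteq> L \<Longrightarrow> \<forall>r<n. r \<notin> Q \<longrightarrow> ys ! r = xs ! r \<Longrightarrow> \<forall>r\<in>Q. ys ! r \<in> G \<Longrightarrow> mul ys \<in> T"
  shows "mul xs \<in> T"
  using MR_aux[OF assms(1,2) finite_subset[OF assms(3)]] assms(3-7) by blast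

lemma line_mem: "x \<in> line scale e \<longleftrightarrow> (\<exists>c. x = c *s e)"
  by (auto simp: line_def)

lemma B_sub_span: "C \<subseteq> B \<Longrightarrow> e \<in> B \<Longrightarrow> e \<in> span C \<Longrightarrow> e \<in> C"
  by (metis B_ind independent_insert independent_mono insert_subset)

lemma line_B_unique:
  assumes "e \<in> B" "e' \<in> B" "x \<noteq> 0" "x \<in> line scale e" "x \<in> line scale e'" shows "e = e'"
proof -
  obtain c where c1: "x = c *s e" using assms(4) by (auto simp: line_mem)
  obtain c' where c2: "x = c' *s e'" using assms(5) by (auto simp: line_mem)
  note c = c1 c2
  have "c \<noteq> 0" using c assms(3) by auto
  then have "e = (c' / c) *s e'" using c by (metis (no_types, lifting) divide_inverse_commute scale_one scale_scale left_inverse)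
  then have "e \<in> span {e'}" by (simp add: span_base span_scale)
  then show ?thesis using B_sub_span[of "{e'}" e] assms(1,2) by auto
qed

lemma line_sub_spanB: "e \<in> B \<Longrightarrow> line scale e \<subseteq> span B"
  by (auto simp: line_def intro!: span_scale intro: span_base)

lemma line_V: "e \<in> B \<Longrightarrow> x \<in> line scale e \<Longrightarrow> x \<in> V \<Longrightarrow> x = 0"
  using line_sub_spanB VB0 by blast

lemma line_sub_in: assumes "subspace P" "P \<subseteq> line scale e" "P \<noteq> {0}" shows "e \<in> P"
proof -
  obtain x where x: "x \<in> P" "x \<noteq> 0" using assms(1,3) subspace_0 by blast
  have "x \<in> line scale e" using assms(2) x(1) by blast
  then obtain c where c: "x = c *s e" unfolding line_mem by blast
  then have c2: "c \<noteq> 0" using x(2) by auto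
  have "inverse c *s x = e" using c c2 by simp
  then show ?thesis using subspace_scale[OF assms(1) x(1)] by metis
qed

lemma scale_in_sub: "subspace S \<Longrightarrow> c *s e \<in> S \<Longrightarrow> c \<noteq> 0 \<Longrightarrow> e \<in> S"
  by (metis left_inverse scale_one scale_scale subspace_scale)

lemma span_disjoint:
  assumes "C1 \<subseteq> B" "C2 \<subseteq> B" "C1 \<inter> C2 = {}" "x \<in> span C1" "x \<in> span C2" shows "x = 0"
proof -
  obtain t1 r1 where 1: "finite t1" "t1 \<subseteq> C1" "x = (\<Sum>a\<in>t1. r1 a *s a)" using assms(4) unfolding span_explicit by blast
  obtain t2 r2 where 2: "finite t2" "t2 \<subseteq> C2" "x = (\<Sum>a\<in>t2. r2 a *s a)" using assms(5) unfolding span_explicit by blast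
  define w where "w a = (if a \<in> t1 then r1 a else - r2 a)" for a
  have d: "t1 \<inter> t2 = {}" using 1 2 assms(3) by auto
  have "(\<Sum>a\<in>t1 \<union> t2. w a *s a) = (\<Sum>a\<in>t1. w a *s a) + (\<Sum>a\<in>t2. w a *s a)"
    using sum.union_disjoint[OF 1(1) 2(1) d] by simp
  also have "(\<Sum>a\<in>t1. w a *s a) = x" using 1(3) by (simp add: w_def)
  also have "(\<Sum>a\<in>t2. w a *s a) = - x" using 2(3) d
    by (auto simp: w_def sum_negf[symmetric] intro!: sum.cong)
  finally have s: "(\<Sum>a\<in>t1 \<union> t2. w a *s a) = 0" by simp
  have "\<forall>a\<in>t1. w a = 0"
    using independentD[OF B_ind _ _ s] 1 2 assms(1,2) by blast
  then have "\<forall>a\<in>t1. r1 a = 0" by (simp add: w_def)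
  then show ?thesis using 1(3) by simp
qed

end

context thm44 begin

lemma mset_filter_split: "mset (filter P xs @ filter (\<lambda>x. \<not> P x) xs) = mset xs"
  by (induction xs) (auto simp: add.commute add.left_commute)

lemma idx_set_mem: "j \<in> idx_set B \<longleftrightarrow> j = None \<or> (\<exists>b\<in>B. j = Some b)"
  by (auto simp: idx_set_def)

lemma perm_nth_lt: "\<sigma> permutes {..<n} \<Longrightarrow> p < n \<Longrightarrow> \<sigma> p < n"
  using permutes_in_image by fastforce

lemma Qgen:
  assumes \<sigma>: "\<sigma> permutes {..<n}" and len: "length js = n" and js: "set js \<subseteq> idx_set B"
  shows "(\<exists>e\<in>B. gp \<sigma> (map (u_of V) js) \<subseteq> line scale e) \<or>
         (gp \<sigma> (map (u_of V) js) \<subseteq> V \<and> (None \<notin> set js \<or> set js \<subseteq> {None}))"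
proof -
  define js1 where "js1 = filter (\<lambda>j. j \<noteq> None) js"
  define js2 where "js2 = filter (\<lambda>j. \<not> j \<noteq> None) js"
  define jcan where "jcan = js1 @ js2"
  have "mset js = mset jcan" unfolding jcan_def js1_def js2_def by (rule mset_filter_split[symmetric])
  then obtain \<rho> where \<rho>: "\<rho> permutes {..<length jcan}" "permute_list \<rho> jcan = js"
    by (rule mset_eq_permutation)
  have lj: "length jcan = n" using \<rho>(2) len by (metis length_permute_list)
  have \<rho>n: "\<rho> permutes {..<n}" using \<rho>(1) lj by simp
  have jsnth: "i < n \<Longrightarrow> js ! i = jcan ! \<rho> i" for i
    using permute_list_nth[OF \<rho>(1), of i] \<rho>(2) lj by simp
  define es where "es = map the js1"
  define k where "k = length es"
  have lk: "length js1 + length js2 = n" using sum_length_filter_compl[of "\<lambda>j. j \<noteq> None" js] len unfolding js1_def js2_def by simp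
  have k: "k = length js1" by (simp add: k_def es_def)
  have js2r: "js2 = replicate (n - k) None"
  proof -
    have "js2 = filter (\<lambda>y. None = y) js" unfolding js2_def by (rule filter_cong) auto
    then have "js2 = replicate (length js2) None" using replicate_length_filter[of None js] by simp
    moreover have "length js2 = n - k" using lk k by simp
    ultimately show ?thesis by simp
  qed
  have esB: "set es \<subseteq> B" using js unfolding es_def js1_def by (auto simp: idx_set_mem)
  have m1: "map (u_of V) js1 = map (\<lambda>x. {x}) es"
    unfolding es_def js1_def by (auto simp: u_of_def)
  have mcan: "map (u_of V) jcan = map (\<lambda>x. {x}) es @ replicate (n - k) V"
    unfolding jcan_def using m1 js2r by (simp add: u_of_def)
  define \<tau> where "\<tau> = \<rho> \<circ> \<sigma>"
  have \<tau>: "\<tau> permutes {..<n}" unfolding \<tau>_def by (rule permutes_compose[OF \<sigma> \<rho>n])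
  have eq: "gp \<sigma> (map (u_of V) js) = gp \<tau> (map (\<lambda>x. {x}) es @ replicate (n - k) V)"
  proof (rule GP_eq[OF \<sigma> \<tau>], intro allI impI)
    fix p assume p: "p < n"
    have sp: "\<sigma> p < n" using perm_nth_lt[OF \<sigma> p] .
    have "map (u_of V) js ! (\<sigma> p) = u_of V (jcan ! \<rho> (\<sigma> p))" using sp len jsnth by simp
    also have "\<dots> = map (u_of V) jcan ! (\<tau> p)" using perm_nth_lt[OF \<rho>n sp] lj by (simp add: \<tau>_def)
    finally show "map (u_of V) js ! \<sigma> p = (map (\<lambda>x. {x}) es @ replicate (n - k) V) ! \<tau> p"
      using mcan by simp
  qed
  have kn: "k \<le> n" using lk k by simp
  consider "k = 0" | "k = n" | "0 < k \<and> k < n" using kn by linarith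
  then show ?thesis
  proof cases
    case 1
    then have "js1 = []" using k by simp
    then have none: "set js \<subseteq> {None}" unfolding js1_def by (auto simp: filter_empty_conv)
    have "gp \<tau> (map (\<lambda>x. {x}) es @ replicate (n - k) V) = gp id (replicate n V)"
    proof (rule GP_eq[OF \<tau> permutes_id], intro allI impI)
      fix p assume p: "p < n"
      have "es = []" using \<open>js1 = []\<close> es_def by simp
      then show "(map (\<lambda>x. {x}) es @ replicate (n - k) V) ! \<tau> p = replicate n V ! id p"
        using 1 perm_nth_lt[OF \<tau> p] p by simp
    qed
    then show ?thesis using cond3 eq none by auto
  next
    case 2
    then have "js2 = []" using lk k by simp
    then have nn: "None \<notin> set js" unfolding js2_def by (auto simp: filter_empty_conv)
    define zs0 where "zs0 = permute_list \<tau> es"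
    have les: "length es = n" using 2 k_def by simp
    have \<tau>e: "\<tau> permutes {..<length es}" using \<tau> les by simp
    have z0: "length zs0 = n" "set zs0 \<subseteq> B" using les esB set_permute_list[OF \<tau>e] by (auto simp: zs0_def)
    have gen: "mul zs = mul zs0" if "length zs = n" "\<forall>p<n. zs ! p \<in> (map (\<lambda>x. {x}) es @ replicate (n - k) V) ! (\<tau> p)" for zs
    proof -
      have "zs = zs0"
      proof (rule nth_equalityI)
        show "length zs = length zs0" using that(1) z0 by simp
        fix i assume "i < length zs"
        then have i: "i < n" using that(1) by simp
        have "zs ! i \<in> (map (\<lambda>x. {x}) es) ! (\<tau> i)" using that(2) i 2 by simp
        then show "zs ! i = zs0 ! i" using perm_nth_lt[OF \<tau> i] les permute_list_nth[OF \<tau>e] i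
          by (simp add: zs0_def)
      qed
      then show ?thesis by simp
    qed
    from cond1[rule_format, OF z0] show ?thesis
    proof
      assume "\<exists>e\<in>B. mul zs0 \<in> line scale e"
      then obtain e where e: "e \<in> B" "mul zs0 \<in> line scale e" by blast
      have "gp \<tau> (map (\<lambda>x. {x}) es @ replicate (n - k) V) \<subseteq> line scale e"
        using e(2) gen by (intro GP_sub[OF \<tau> line_subspace]) auto
      then show ?thesis using eq e(1) by auto
    next
      assume "mul zs0 \<in> V"
      then have "gp \<tau> (map (\<lambda>x. {x}) es @ replicate (n - k) V) \<subseteq> V"
        using gen by (intro GP_sub[OF \<tau> V_subspace]) auto
      then show ?thesis using eq nn by auto
    qed
  next
    case 3
    then obtain e where "e \<in> B" "gp \<tau> (map (\<lambda>x. {x}) es @ replicate (n - k) V) \<subseteq> line scale e"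
      using cond2 \<tau> esB k_def by blast
    then show ?thesis using eq by auto
  qed
qed

end

context thm44 begin

lemma gp_subspace: "subspace (gp \<sigma> As)"
  by (simp add: gen_prod_def)

lemma amap_V: assumes "gp \<sigma> (map (u_of V) js) \<noteq> {0}" "gp \<sigma> (map (u_of V) js) \<subseteq> V"
  shows "a_map scale n mul V B \<sigma> js = {None}"
proof -
  obtain x where x: "x \<in> gp \<sigma> (map (u_of V) js)" "x \<noteq> 0" using assms(1) gp_subspace subspace_0 by blast
  have "\<not> (r \<in> B \<and> gp \<sigma> (map (u_of V) js) \<subseteq> line scale r)" for r
    using x assms(2) line_V by blast
  then show ?thesis using assms unfolding a_map_def Let_def by auto
qed

lemma amap_line: assumes "gp \<sigma> (map (u_of V) js) \<noteq> {0}" "gp \<sigma> (map (u_of V) js) \<subseteq> line scale r" "r \<in> B"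
  shows "a_map scale n mul V B \<sigma> js = {Some r}"
proof -
  obtain x where x: "x \<in> gp \<sigma> (map (u_of V) js)" "x \<noteq> 0" using assms(1) gp_subspace subspace_0 by blast
  have nV: "\<not> gp \<sigma> (map (u_of V) js) \<subseteq> V" using x assms(2,3) line_V by blast
  have "r' \<in> B \<and> gp \<sigma> (map (u_of V) js) \<subseteq> line scale r' \<longleftrightarrow> r' = r" for r'
    using x assms(2,3) line_B_unique by blast
  then show ?thesis using assms nV unfolding a_map_def Let_def by auto
qed

lemma muqD: assumes "e \<in> B" "k1 \<in> idx_set B" "set ks \<subseteq> idx_set B" "length ks = n - 1"
  "Some e \<in> mu_map scale n mul V B b1 k1 b2 ks"
  shows "\<exists>\<sigma>. \<sigma> permutes {..<n} \<and> e \<in> gp \<sigma> (map (u_of V) (k1 # ks))"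
  by (rule mu_quasi_mult_def[THEN iffD1, OF muq, rule_format, OF assms])

definition Rb where
  "Rb x y \<longleftrightarrow> x \<in> B \<and> y \<in> B \<and> (\<exists>zs s. length zs = n \<and> set zs \<subseteq> B \<union> V \<and> x \<in> set zs \<and> s \<noteq> 0 \<and> mul zs = s *s y)"

definition Sr where "Sr = {(x, y). Rb x y} \<union> {(x, y). Rb x y}\<inverse>"

definition E where "E = Sr\<^sup>* \<inter> (B \<times> B)"

lemma sym_Sr: "sym Sr"
  unfolding Sr_def sym_def by blast

lemma E_equiv: "equiv B E"
proof (rule equivI)
  show "refl_on B E" unfolding E_def refl_on_def by auto
  show "E \<subseteq> B \<times> B" unfolding E_def by auto
  have "sym (Sr\<^sup>*)" by (rule sym_rtrancl[OF sym_Sr])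
  moreover have "sym (B \<times> B)" unfolding sym_def by blast
  ultimately show "sym E" unfolding E_def by (rule sym_Int)
  have "trans (B \<times> B)" unfolding trans_def by blast
  then show "trans E" unfolding E_def by (intro trans_Int trans_rtrancl)
qed

lemma Rb_E: assumes "Rb x y" shows "(x, y) \<in> E"
proof -
  have "(x, y) \<in> Sr" using assms unfolding Sr_def by blast
  then have "(x, y) \<in> Sr\<^sup>*" by (rule r_into_rtrancl)
  moreover have "x \<in> B" "y \<in> B" using assms unfolding Rb_def by blast+
  ultimately show ?thesis unfolding E_def by blast
qed

lemma B_V_disj: assumes "b \<in> B" shows "b \<notin> V"
proof
  assume "b \<in> V"
  moreover have "b \<in> span B" using assms by (rule span_base)
  ultimately have "b \<in> V \<inter> span B" by blast
  then have "b = 0" using VB0 by simp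
  then show False using assms zero_notin_B by simp
qed

lemma span_nonzero_gen: assumes "c \<in> span X" "c \<noteq> 0" shows "\<exists>x\<in>X. x \<noteq> 0"
proof (rule ccontr)
  assume "\<not> (\<exists>x\<in>X. x \<noteq> 0)"
  then have "X \<subseteq> {0}" by auto
  then have "span X \<subseteq> {0}" using span_mono[of X "{0}"] by (simp add: span_eq_iff)
  then show False using assms by auto
qed

lemma gp_pos: assumes "\<sigma> permutes {..<n}" "length zs = n" "\<forall>p<n. zs ! p \<in> As ! (\<sigma> p)" "i < n" "As ! i = {b}"
  shows "b \<in> set zs"
proof -
  have ip: "inv \<sigma> i < n" using permutes_in_image[OF permutes_inv[OF assms(1)]] assms(4) by auto
  have "zs ! inv \<sigma> i \<in> As ! (\<sigma> (inv \<sigma> i))" using assms(3) ip by blast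
  then have zb: "zs ! inv \<sigma> i = b" using permutes_inverses(1)[OF assms(1)] assms(5) by simp
  show "b \<in> set zs" using zb ip assms(2) nth_mem by metis
qed

end

context thm44 begin

lemma Qlist: assumes "length zs = n" "set zs \<subseteq> B \<union> V"
  shows "(\<exists>e\<in>B. mul zs \<in> line scale e) \<or> (mul zs \<in> V \<and> set zs \<subseteq> B) \<or> set zs \<subseteq> V"
proof -
  define js where "js = map (\<lambda>z. if z \<in> B then Some z else None) zs"
  have ljs: "length js = n" using assms(1) by (simp add: js_def)
  have sjs: "set js \<subseteq> idx_set B" by (auto simp: js_def idx_set_def)
  have m: "mul zs \<in> gp id (map (u_of V) js)"
  proof (rule GP_mem[OF permutes_id assms(1)], intro allI impI)
    fix p assume p: "p < n"
    have "zs ! p \<in> B \<union> V" using assms p nth_mem by blast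
    then show "zs ! p \<in> map (u_of V) js ! id p" using p assms(1) by (auto simp: js_def u_of_def)
  qed
  from Qgen[OF permutes_id ljs sjs] show ?thesis
  proof
    assume "\<exists>e\<in>B. gp id (map (u_of V) js) \<subseteq> line scale e"
    then show ?thesis using m by blast
  next
    assume a: "gp id (map (u_of V) js) \<subseteq> V \<and> (None \<notin> set js \<or> set js \<subseteq> {None})"
    then have mV: "mul zs \<in> V" using m by blast
    from a have "None \<notin> set js \<or> set js \<subseteq> {None}" by blast
    then show ?thesis
    proof
      assume "None \<notin> set js"
      then have "set zs \<subseteq> B" by (auto simp: js_def split: if_splits)
      then show ?thesis using mV by blast
    next
      assume "set js \<subseteq> {None}"
      then have "\<forall>z\<in>set zs. z \<notin> B" by (auto simp: js_def split: if_splits)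
      then have "set zs \<subseteq> V" using assms(2) by blast
      then show ?thesis by blast
    qed
  qed
qed

lemma Vprod_class: assumes zs: "length zs = n" "set zs \<subseteq> B" "mul zs \<in> V" "mul zs \<noteq> 0" and z: "z \<in> set zs"
  shows "(z, hd zs) \<in> E"
proof -
  obtain c bs where cbs: "zs = c # bs" using zs(1) n2 by (cases zs) auto
  have lbs: "length bs = n - 1" using zs(1) cbs by simp
  have cB: "c \<in> B" and bsB: "set bs \<subseteq> B" using zs(2) cbs by auto
  have bsne: "bs \<noteq> []" using lbs n2 by auto
  define js0 where "js0 = map Some zs"
  have mP: "mul zs \<in> gp id (map (u_of V) js0)"
    by (rule GP_mem[OF permutes_id zs(1)]) (use zs(1) in \<open>auto simp: js0_def u_of_def\<close>)
  have PV: "gp id (map (u_of V) js0) \<subseteq> V"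
  proof (rule GP_sub[OF permutes_id V_subspace])
    fix zs' assume zs': "length zs' = n" "\<forall>p<n. zs' ! p \<in> map (u_of V) js0 ! id p"
    have "zs' = zs" by (rule nth_equalityI) (use zs' zs(1) in \<open>auto simp: js0_def u_of_def\<close>)
    then show "mul zs' \<in> V" using zs(3) by simp
  qed
  have P0: "gp id (map (u_of V) js0) \<noteq> {0}" using mP zs(4) by blast
  have am: "a_map scale n mul V B id js0 = {None}" by (rule amap_V[OF P0 PV])
  have "Some c \<in> b_map scale n mul V B id None (map Some bs)"
    unfolding b_map_def using am cB cbs by (auto simp: js0_def idx_set_def)
  then have "Some c \<in> mu_map scale n mul V B False None True (map Some bs)"
    by (simp add: mu_map_def) (metis permutes_id)
  then obtain \<sigma> where \<sigma>: "\<sigma> permutes {..<n}" "c \<in> gp \<sigma> (map (u_of V) (None # map Some bs))"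
    using muqD[OF cB, of None "map Some bs" False True] bsB lbs by (auto simp: idx_set_def)
  define js1 where "js1 = None # map Some bs"
  have l1: "length js1 = n" "set js1 \<subseteq> idx_set B" using lbs bsB n2 by (auto simp: js1_def idx_set_def)
  have nn: "\<not> set js1 \<subseteq> {None}" using bsne by (cases bs) (auto simp: js1_def)
  have "None \<in> set js1" by (simp add: js1_def)
  then obtain e where e: "e \<in> B" "gp \<sigma> (map (u_of V) js1) \<subseteq> line scale e"
    using Qgen[OF \<sigma>(1) l1] nn by blast
  have "c \<in> line scale c" by (auto simp: line_mem intro: exI[of _ 1])
  moreover have "c \<in> line scale e" using e \<sigma>(2) by (auto simp: js1_def)
  moreover have "c \<noteq> 0" using cB zero_notin_B by auto
  ultimately have ec: "e = c" using line_B_unique[OF e(1) cB] by blast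
  have "c \<in> span {mul zs | zs. length zs = n \<and> (\<forall>p<n. zs ! p \<in> map (u_of V) js1 ! (\<sigma> p))}"
    using \<sigma>(2) GP[OF \<sigma>(1)] by (simp add: js1_def)
  then obtain x where x: "x \<in> {mul zs | zs. length zs = n \<and> (\<forall>p<n. zs ! p \<in> map (u_of V) js1 ! (\<sigma> p))}" "x \<noteq> 0"
    using span_nonzero_gen \<open>c \<noteq> 0\<close> by blast
  then obtain zs' where zs': "length zs' = n" "\<forall>p<n. zs' ! p \<in> map (u_of V) js1 ! (\<sigma> p)" "x = mul zs'" by blast
  have "x \<in> gp \<sigma> (map (u_of V) js1)" unfolding zs'(3) by (rule GP_mem[OF \<sigma>(1) zs'(1,2)])
  then have "x \<in> line scale c" using e ec by blast
  then obtain s where s: "x = s *s c" by (auto simp: line_mem)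
  have s0: "s \<noteq> 0" using s x(2) by auto
  have zs'BV: "set zs' \<subseteq> B \<union> V"
  proof
    fix y assume "y \<in> set zs'"
    then obtain p where p: "p < n" "y = zs' ! p" using zs'(1) by (metis in_set_conv_nth)
    have sp: "\<sigma> p < n" using perm_nth_lt[OF \<sigma>(1) p(1)] .
    have "y \<in> map (u_of V) js1 ! (\<sigma> p)" using zs'(2) p by blast
    then have "y \<in> u_of V (js1 ! \<sigma> p)" using sp l1(1) by simp
    moreover have "js1 ! \<sigma> p \<in> idx_set B" using l1 sp nth_mem by blast
    ultimately show "y \<in> B \<union> V" by (auto simp: idx_set_def u_of_def)
  qed
  show ?thesis
  proof (cases "z = c")
    case True
    then show ?thesis using cB cbs E_equiv by (simp add: equiv_def refl_on_def)
  next
    case False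
    then have "z \<in> set bs" using z cbs by simp
    then obtain t where t: "t < length bs" "bs ! t = z" by (metis in_set_conv_nth)
    have "map (u_of V) js1 ! (Suc t) = {z}" using t by (simp add: js1_def u_of_def)
    then have "z \<in> set zs'" using gp_pos[OF \<sigma>(1) zs'(1,2), of "Suc t" z] t lbs by simp
    then have "Rb z c" unfolding Rb_def using zs' zs'BV s s0 cB \<open>z \<in> set bs\<close> bsB by blast
    then show ?thesis using Rb_E cbs by simp
  qed
qed

end

context thm44 begin

lemma L_span_BV: "L \<subseteq> span (B \<union> V)"
proof
  fix x assume "x \<in> L"
  then obtain v w where vw: "x = v + w" "v \<in> V" "w \<in> span B" using L_dec by (auto simp: setsum_def)
  have "v \<in> span (B \<union> V)" using vw(2) by (intro span_base) simp
  moreover have "span B \<subseteq> span (B \<union> V)" by (rule span_mono) simp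
  then have "w \<in> span (B \<union> V)" using vw(3) by (rule subsetD)
  ultimately show "x \<in> span (B \<union> V)" unfolding vw(1) by (rule span_add)
qed

lemma BV_L: "B \<union> V \<subseteq> L" using B_L V_L by blast

lemma reduce_BV:
  assumes T: "subspace T" and F: "F \<subseteq> {..<n}" and zs: "length zs = n" "set zs \<subseteq> L" "\<forall>r\<in>F. zs ! r \<in> B \<union> V"
    and H: "\<And>ys. length ys = n \<Longrightarrow> set ys \<subseteq> B \<union> V \<Longrightarrow> \<forall>r\<in>F. ys ! r = zs ! r \<Longrightarrow> mul ys \<in> T"
  shows "mul zs \<in> T"
proof (rule MR[OF T BV_L, of "{..<n} - F"])
  show "{..<n} - F \<subseteq> {..<n}" by blast
  show "length zs = n" "set zs \<subseteq> L" using zs by auto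
  show "\<forall>r\<in>{..<n} - F. zs ! r \<in> span (B \<union> V)"
  proof
    fix r assume "r \<in> {..<n} - F"
    then have "zs ! r \<in> L" using zs(1,2) nth_mem by fastforce
    then show "zs ! r \<in> span (B \<union> V)" using L_span_BV by (rule subsetD[rotated])
  qed
  fix ys assume ys: "length ys = n" "set ys \<subseteq> L" "\<forall>r<n. r \<notin> {..<n} - F \<longrightarrow> ys ! r = zs ! r" "\<forall>r\<in>{..<n} - F. ys ! r \<in> B \<union> V"
  have eq: "\<forall>r\<in>F. ys ! r = zs ! r" using ys(3) F by blast
  have "set ys \<subseteq> B \<union> V"
  proof
    fix y assume "y \<in> set ys"
    then obtain r where r: "r < n" "y = ys ! r" using ys(1) by (metis in_set_conv_nth)
    show "y \<in> B \<union> V"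
    proof (cases "r \<in> F")
      case True then show ?thesis using eq zs(3) r by auto
    next
      case False then show ?thesis using ys(4) r by auto
    qed
  qed
  then show "mul ys \<in> T" using H ys(1) eq by blast
qed

lemma HL: "(\<Union>g. Lg g) \<subseteq> L" using Lg_sub by blast

lemma reduce_hom:
  assumes T: "subspace T" and F: "F \<subseteq> {..<n}" and zs: "length zs = n" "set zs \<subseteq> L" "\<forall>r\<in>F. \<exists>g. zs ! r \<in> Lg g"
    and H: "\<And>ys. length ys = n \<Longrightarrow> set ys \<subseteq> L \<Longrightarrow> \<forall>r<n. \<exists>g. ys ! r \<in> Lg g \<Longrightarrow> \<forall>r\<in>F. ys ! r = zs ! r \<Longrightarrow> mul ys \<in> T"
  shows "mul zs \<in> T"
proof (rule MR[OF T HL, of "{..<n} - F"])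
  show "{..<n} - F \<subseteq> {..<n}" by blast
  show "length zs = n" "set zs \<subseteq> L" using zs by auto
  show "\<forall>r\<in>{..<n} - F. zs ! r \<in> span (\<Union>g. Lg g)"
  proof
    fix r assume "r \<in> {..<n} - F"
    then have "zs ! r \<in> L" using zs(1,2) nth_mem by fastforce
    then show "zs ! r \<in> span (\<Union>g. Lg g)" using Lspan by simp
  qed
  fix ys assume ys: "length ys = n" "set ys \<subseteq> L" "\<forall>r<n. r \<notin> {..<n} - F \<longrightarrow> ys ! r = zs ! r" "\<forall>r\<in>{..<n} - F. ys ! r \<in> (\<Union>g. Lg g)"
  have eq: "\<forall>r\<in>F. ys ! r = zs ! r" using ys(3) F by blast
  have "\<forall>r<n. \<exists>g. ys ! r \<in> Lg g"
  proof (intro allI impI)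
    fix r assume r: "r < n"
    show "\<exists>g. ys ! r \<in> Lg g"
    proof (cases "r \<in> F")
      case True then show ?thesis using eq zs(3) r by auto
    next
      case False then show ?thesis using ys(4) r by auto
    qed
  qed
  then show "mul ys \<in> T" using H ys(1,2) eq by blast
qed

lemma cls_sub: assumes "C \<in> B // E" shows "C \<subseteq> B"
proof -
  obtain a where a: "C = E `` {a}" "a \<in> B" using assms by (rule quotientE)
  show ?thesis unfolding a(1) E_def by blast
qed

lemma cls_ne: assumes "C \<in> B // E" shows "C \<noteq> {}"
proof -
  obtain a where a: "C = E `` {a}" "a \<in> B" using assms by (rule quotientE)
  have "a \<in> C" unfolding a(1) using equiv_class_self[OF E_equiv a(2)] .
  then show ?thesis by blast
qed

lemma cls_closed: assumes "C \<in> B // E" "x \<in> C" "(x, y) \<in> E" shows "y \<in> C"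
proof -
  obtain a where a: "C = E `` {a}" "a \<in> B" using assms(1) by (rule quotientE)
  have "(a, x) \<in> E" using assms(2) a by blast
  then have "(a, y) \<in> E" using assms(3) E_equiv by (meson equivE transD)
  then show ?thesis using a by blast
qed

lemma E_sym: "(x, y) \<in> E \<Longrightarrow> (y, x) \<in> E"
  using E_equiv by (meson equivE symD)

lemma cls_E: assumes "C \<in> B // E" "x \<in> C" "y \<in> C" shows "(x, y) \<in> E"
proof -
  obtain a where a: "C = E `` {a}" "a \<in> B" using assms(1) by (rule quotientE)
  have "(a, x) \<in> E" "(a, y) \<in> E" using assms(2,3) a by blast+
  then show ?thesis using E_sym E_equiv by (meson equivE transD)
qed

lemma cls_of: "b \<in> B \<Longrightarrow> E `` {b} \<in> B // E" "b \<in> B \<Longrightarrow> b \<in> E `` {b}"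
   apply (erule quotientI) apply (erule equiv_class_self[OF E_equiv]) done

lemma cls_disj: "C \<in> B // E \<Longrightarrow> C' \<in> B // E \<Longrightarrow> C \<noteq> C' \<Longrightarrow> C \<inter> C' = {}"
  using quotient_disj[OF E_equiv] by blast

definition VCg where "VCg C = {mul es | es. length es = n \<and> set es \<subseteq> C \<and> mul es \<in> V}"
definition VC where "VC C = span (VCg C)"
definition SC where "SC C = setsum (VC C) (span C)"

lemma SC_span: "SC C = span (C \<union> VCg C)"
  unfolding SC_def VC_def setsum_def span_Un
proof (intro equalityI subsetI)
  fix x assume "x \<in> {a + b |a b. a \<in> span (VCg C) \<and> b \<in> span C}"
  then obtain a b where ab: "x = a + b" "a \<in> span (VCg C)" "b \<in> span C" by blast
  show "x \<in> {x + y |x y. x \<in> span C \<and> y \<in> span (VCg C)}"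
    by (rule CollectI, rule exI[of _ b], rule exI[of _ a]) (simp add: ab add.commute)
next
  fix x assume "x \<in> {x + y |x y. x \<in> span C \<and> y \<in> span (VCg C)}"
  then obtain a b where ab: "x = b + a" "a \<in> span (VCg C)" "b \<in> span C" by blast
  show "x \<in> {a + b |a b. a \<in> span (VCg C) \<and> b \<in> span C}"
    by (rule CollectI, rule exI[of _ a], rule exI[of _ b]) (simp add: ab add.commute)
qed

lemma SC_subspace: "subspace (SC C)" by (simp add: SC_span)

lemma C_SC: "C \<subseteq> SC C"
  unfolding SC_span using span_superset[of "C \<union> VCg C"] by blast
lemma VCg_SC: "VCg C \<subseteq> SC C"
  unfolding SC_span using span_superset[of "C \<union> VCg C"] by blast
lemma VC_SC: "VC C \<subseteq> SC C"
  unfolding SC_span VC_def by (rule span_mono) blast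
lemma spanC_SC: "span C \<subseteq> SC C"
  unfolding SC_span by (rule span_mono) blast

lemma VCg_V: "VCg C \<subseteq> V" unfolding VCg_def by blast

lemma VC_V: "VC C \<subseteq> V" unfolding VC_def using span_minimal[OF VCg_V V_subspace] .

lemma VC_subspace: "subspace (VC C)" by (simp add: VC_def)

lemma SC_L: assumes "C \<subseteq> B" shows "SC C \<subseteq> L"
proof -
  have "C \<union> VCg C \<subseteq> L" using assms B_L V_L VCg_V by blast
  then show ?thesis unfolding SC_span by (rule span_minimal[OF _ L_subspace])
qed

lemma K: assumes C: "C \<in> B // E" and zs: "length zs = n" "set zs \<subseteq> L" and p: "p < n" "zs ! p \<in> C"
  shows "mul zs \<in> SC C"
proof (rule reduce_BV[OF SC_subspace, of "{p}"])
  have CB: "C \<subseteq> B" using cls_sub[OF C] .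
  show "{p} \<subseteq> {..<n}" "length zs = n" "set zs \<subseteq> L" "\<forall>r\<in>{p}. zs ! r \<in> B \<union> V" using p zs CB by auto
  fix ys assume ys: "length ys = n" "set ys \<subseteq> B \<union> V" "\<forall>r\<in>{p}. ys ! r = zs ! r"
  define c where "c = ys ! p"
  have cC: "c \<in> C" using ys(3) p by (simp add: c_def)
  have cys: "c \<in> set ys" using p ys(1) by (simp add: c_def)
  have cB: "c \<in> B" using cC CB by blast
  from Qlist[OF ys(1,2)] show "mul ys \<in> SC C"
  proof (elim disjE)
    assume "\<exists>e\<in>B. mul ys \<in> line scale e"
    then obtain e s where e: "e \<in> B" "mul ys = s *s e" by (auto simp: line_mem)
    show ?thesis
    proof (cases "s = 0")
      case True then show ?thesis using e subspace_0[OF SC_subspace] by simp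
    next
      case False
      then have "Rb c e" unfolding Rb_def using cB e ys(1,2) cys by blast
      then have "e \<in> C" using cls_closed[OF C cC] Rb_E by blast
      then have "e \<in> SC C" using C_SC by blast
      then show ?thesis using e subspace_scale[OF SC_subspace] by simp
    qed
  next
    assume a: "mul ys \<in> V \<and> set ys \<subseteq> B"
    show ?thesis
    proof (cases "mul ys = 0")
      case True then show ?thesis using subspace_0[OF SC_subspace] by simp
    next
      case False
      have hd: "hd ys \<in> C" using Vprod_class[OF ys(1) _ _ False cys] a cls_closed[OF C cC] by blast
      have "set ys \<subseteq> C"
      proof
        fix z assume "z \<in> set ys"
        then have "(z, hd ys) \<in> E" using Vprod_class[OF ys(1) _ _ False] a by blast
        then show "z \<in> C" using cls_closed[OF C hd] E_sym by blast
      qed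
      then have "mul ys \<in> VCg C" unfolding VCg_def using ys(1) a by blast
      then show ?thesis using VCg_SC by blast
    qed
  next
    assume "set ys \<subseteq> V"
    then show ?thesis using cys cB B_V_disj by blast
  qed
qed

lemma M1: assumes C: "C \<in> B // E" and C': "C' \<in> B // E" and CC: "C \<noteq> C'"
  and zs: "length zs = n" "set zs \<subseteq> L" and p: "p < n" "p' < n" "p \<noteq> p'" "zs ! p \<in> C" "zs ! p' \<in> C'"
  shows "mul zs = 0"
proof -
  have "mul zs \<in> {0}"
  proof (rule reduce_BV[OF subspace_single_0, of "{p, p'}"])
    have CB: "C \<subseteq> B" "C' \<subseteq> B" using cls_sub[OF C] cls_sub[OF C'] .
    show "{p, p'} \<subseteq> {..<n}" "length zs = n" "set zs \<subseteq> L" "\<forall>r\<in>{p, p'}. zs ! r \<in> B \<union> V" using p zs CB by auto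
    fix ys assume ys: "length ys = n" "set ys \<subseteq> B \<union> V" "\<forall>r\<in>{p, p'}. ys ! r = zs ! r"
    define c where "c = ys ! p"
    define c' where "c' = ys ! p'"
    have cC: "c \<in> C" "c' \<in> C'" using ys(3) p by (simp_all add: c_def c'_def)
    have cys: "c \<in> set ys" "c' \<in> set ys" using p ys(1) by (simp_all add: c_def c'_def)
    have cB: "c \<in> B" "c' \<in> B" using cC CB by blast+
    have dis: "C \<inter> C' = {}" using cls_disj[OF C C' CC] .
    from Qlist[OF ys(1,2)] show "mul ys \<in> {0}"
    proof (elim disjE)
      assume "\<exists>e\<in>B. mul ys \<in> line scale e"
      then obtain e s where e: "e \<in> B" "mul ys = s *s e" by (auto simp: line_mem)
      show ?thesis
      proof (cases "s = 0")
        case True then show ?thesis using e by simp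
      next
        case False
        then have "Rb c e" "Rb c' e" unfolding Rb_def using cB e ys(1,2) cys by blast+
        then have "e \<in> C" "e \<in> C'" using cls_closed[OF C cC(1)] cls_closed[OF C' cC(2)] Rb_E by blast+
        then show ?thesis using dis by blast
      qed
    next
      assume a: "mul ys \<in> V \<and> set ys \<subseteq> B"
      show ?thesis
      proof (cases "mul ys = 0")
        case True then show ?thesis by simp
      next
        case False
        have "hd ys \<in> C" using Vprod_class[OF ys(1) _ _ False cys(1)] a cls_closed[OF C cC(1)] by blast
        moreover have "hd ys \<in> C'" using Vprod_class[OF ys(1) _ _ False cys(2)] a cls_closed[OF C' cC(2)] by blast
        ultimately show ?thesis using dis by blast
      qed
    next
      assume "set ys \<subseteq> V"
      then show ?thesis using cys cB B_V_disj by blast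
    qed
  qed
  then show ?thesis by simp
qed

end

context thm44 begin

lemma span_pos:
  assumes T: "subspace T" and zs: "length zs = n" "set zs \<subseteq> L" and p: "p < n" and G: "G \<subseteq> L" "zs ! p \<in> span G"
    and H: "\<And>a. a \<in> G \<Longrightarrow> mul (zs[p := a]) \<in> T"
  shows "mul zs \<in> T"
proof -
  have "zs ! p \<in> {a. a \<in> L \<and> mul (zs[p := a]) \<in> T}"
  proof (rule span_subspace_induct[OF G(2) subspace_preimage_mul[OF T zs p]])
    fix a assume "a \<in> G" then show "a \<in> {a. a \<in> L \<and> mul (zs[p := a]) \<in> T}" using H G(1) by blast
  qed
  then show ?thesis by simp
qed

lemma del_len: "length ys = n \<Longrightarrow> k < n \<Longrightarrow> length (take k ys @ drop (Suc k) ys) = n - 1"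
  by simp

lemma del_nth: assumes "length ys = n" "k < n" "r < n - 1"
  shows "(take k ys @ drop (Suc k) ys) ! r = ys ! (if r < k then r else Suc r)"
proof -
  have lt: "length (take k ys) = k" using assms by simp
  show ?thesis
  proof (cases "r < k")
    case True then show ?thesis using lt by (simp add: nth_append)
  next
    case False
    then have "(take k ys @ drop (Suc k) ys) ! r = drop (Suc k) ys ! (r - k)" using lt by (simp add: nth_append)
    also have "\<dots> = ys ! (Suc k + (r - k))" using assms False by (subst nth_drop) auto
    finally show ?thesis using False by simp
  qed
qed

lemma del_mem: assumes "length ys = n" "k < n" "r < n" "r \<noteq> k"
  shows "ys ! r \<in> set (take k ys @ drop (Suc k) ys)"
proof -
  have l: "length (take k ys @ drop (Suc k) ys) = n - 1" using assms by simp
  show ?thesis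
  proof (cases "r < k")
    case True
    then have "(take k ys @ drop (Suc k) ys) ! r = ys ! r" using del_nth[OF assms(1,2), of r] assms by simp
    moreover have "r < n - 1" using True assms by simp
    ultimately show ?thesis using l nth_mem[of r "take k ys @ drop (Suc k) ys"] by simp
  next
    case False
    then have r1: "r - 1 < n - 1" "\<not> r - 1 < k" "Suc (r - 1) = r" using assms by auto
    then have "(take k ys @ drop (Suc k) ys) ! (r - 1) = ys ! r" using del_nth[OF assms(1,2), of "r - 1"] by simp
    then show ?thesis using l r1 nth_mem[of "r - 1" "take k ys @ drop (Suc k) ys"] by simp
  qed
qed

lemma del_set: "set (take k ys @ drop (Suc k) ys) \<subseteq> set ys"
  using set_take_subset[of k ys] set_drop_subset[of "Suc k" ys] by auto

lemma IDT:
  assumes T: "subspace T" and ys: "length ys = n" "k < n" "\<forall>r<n. \<exists>g. ys ! r \<in> Lg g" "ys ! k = mul es"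
    and es: "length es = n" "\<forall>r<n. \<exists>g. es ! r \<in> Lg g"
    and H: "\<And>i j \<sigma>1 \<sigma>2. i < n \<Longrightarrow> j < n \<Longrightarrow> \<sigma>1 permutes {..<n} \<Longrightarrow> \<sigma>2 permutes {..<n - 1} \<Longrightarrow>
       gLt_term mul n es (take k ys @ drop (Suc k) ys) i j \<sigma>1 \<sigma>2 \<in> T"
  shows "mul ys \<in> T"
proof -
  have "\<exists>\<alpha> :: nat \<Rightarrow> nat \<Rightarrow> nat \<Rightarrow> (nat \<Rightarrow> nat) \<Rightarrow> (nat \<Rightarrow> nat) \<Rightarrow> 'f.
        \<forall>k<n. \<forall>xs ys gx gy.
          length xs = n \<longrightarrow> length ys = n - 1 \<longrightarrow>
          (\<forall>r<n. xs ! r \<in> Lg (gx r)) \<longrightarrow> (\<forall>r<n - 1. ys ! r \<in> Lg (gy r)) \<longrightarrow>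
          mul (take k ys @ [mul xs] @ drop k ys) =
          (\<Sum>i<n. \<Sum>j<n. \<Sum>\<sigma>1\<in>{\<sigma>. \<sigma> permutes {..<n}}. \<Sum>\<sigma>2\<in>{\<sigma>. \<sigma> permutes {..<n - 1}}.
             scale (\<alpha> i j k \<sigma>1 \<sigma>2 *
                    color_sign eps (case_sum gx gy) (gLt_lhs_order n k) (gLt_rhs_order n i j \<sigma>1 \<sigma>2))
                   (gLt_term mul n xs ys i j \<sigma>1 \<sigma>2))"
    using alg unfolding color_gLt_algebra_def by (rule conjunct2)
  then obtain \<alpha> :: "nat \<Rightarrow> nat \<Rightarrow> nat \<Rightarrow> (nat \<Rightarrow> nat) \<Rightarrow> (nat \<Rightarrow> nat) \<Rightarrow> 'f" where A:
     "\<forall>k<n. \<forall>xs ys gx gy.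
          length xs = n \<longrightarrow> length ys = n - 1 \<longrightarrow>
          (\<forall>r<n. xs ! r \<in> Lg (gx r)) \<longrightarrow> (\<forall>r<n - 1. ys ! r \<in> Lg (gy r)) \<longrightarrow>
          mul (take k ys @ [mul xs] @ drop k ys) =
          (\<Sum>i<n. \<Sum>j<n. \<Sum>\<sigma>1\<in>{\<sigma>. \<sigma> permutes {..<n}}. \<Sum>\<sigma>2\<in>{\<sigma>. \<sigma> permutes {..<n - 1}}.
             scale (\<alpha> i j k \<sigma>1 \<sigma>2 *
                    color_sign eps (case_sum gx gy) (gLt_lhs_order n k) (gLt_rhs_order n i j \<sigma>1 \<sigma>2))
                   (gLt_term mul n xs ys i j \<sigma>1 \<sigma>2))" by (elim exE)
  define ys' where "ys' = take k ys @ drop (Suc k) ys"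
  define gx where "gx r = (SOME g. es ! r \<in> Lg g)" for r
  define gy where "gy r = (SOME g. ys' ! r \<in> Lg g)" for r
  have ly': "length ys' = n - 1" using ys by (simp add: ys'_def)
  have hx: "\<forall>r<n. es ! r \<in> Lg (gx r)"
  proof (intro allI impI)
    fix r assume "r < n"
    then have "\<exists>g. es ! r \<in> Lg g" using es(2) by blast
    then show "es ! r \<in> Lg (gx r)" unfolding gx_def by (rule someI_ex)
  qed
  have hy: "\<forall>r<n - 1. ys' ! r \<in> Lg (gy r)"
  proof (intro allI impI)
    fix r assume r: "r < n - 1"
    have "(if r < k then r else Suc r) < n" using r by auto
    then have "\<exists>g. ys ! (if r < k then r else Suc r) \<in> Lg g" using ys(3) by blast
    moreover have "ys' ! r = ys ! (if r < k then r else Suc r)" using del_nth[OF ys(1,2) r] by (simp add: ys'_def)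
    ultimately have "\<exists>g. ys' ! r \<in> Lg g" by simp
    then show "ys' ! r \<in> Lg (gy r)" unfolding gy_def by (rule someI_ex)
  qed
  have eq: "mul (take k ys' @ [mul es] @ drop k ys') =
          (\<Sum>i<n. \<Sum>j<n. \<Sum>\<sigma>1\<in>{\<sigma>. \<sigma> permutes {..<n}}. \<Sum>\<sigma>2\<in>{\<sigma>. \<sigma> permutes {..<n - 1}}.
             scale (\<alpha> i j k \<sigma>1 \<sigma>2 *
                    color_sign eps (case_sum gx gy) (gLt_lhs_order n k) (gLt_rhs_order n i j \<sigma>1 \<sigma>2))
                   (gLt_term mul n es ys' i j \<sigma>1 \<sigma>2))"
    by (rule A[rule_format, OF ys(2) es(1) ly' hx[rule_format] hy[rule_format]])
  have lhs: "take k ys' @ [mul es] @ drop k ys' = ys"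
  proof -
    have "take k ys' = take k ys" using ys(1,2) by (simp add: ys'_def)
    moreover have "drop k ys' = drop (Suc k) ys" using ys(1,2) by (simp add: ys'_def)
    ultimately show ?thesis using ys(1,2,4) id_take_nth_drop[of k ys] by simp
  qed
  have "(\<Sum>i<n. \<Sum>j<n. \<Sum>\<sigma>1\<in>{\<sigma>. \<sigma> permutes {..<n}}. \<Sum>\<sigma>2\<in>{\<sigma>. \<sigma> permutes {..<n - 1}}.
             scale (\<alpha> i j k \<sigma>1 \<sigma>2 *
                    color_sign eps (case_sum gx gy) (gLt_lhs_order n k) (gLt_rhs_order n i j \<sigma>1 \<sigma>2))
                   (gLt_term mul n es ys' i j \<sigma>1 \<sigma>2)) \<in> T"
  proof (intro subspace_sum[OF T] subspace_scale[OF T])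
    fix i j \<sigma>1 \<sigma>2 assume "i \<in> {..<n}" "j \<in> {..<n}" "\<sigma>1 \<in> {\<sigma>. \<sigma> permutes {..<n}}" "\<sigma>2 \<in> {\<sigma>. \<sigma> permutes {..<n - 1}}"
    then show "gLt_term mul n es ys' i j \<sigma>1 \<sigma>2 \<in> T" unfolding ys'_def by (intro H) auto
  qed
  then show ?thesis using eq lhs by simp
qed

lemma TS: assumes "length xs = n" "length ys' = n - 1" "i < n" "j < n"
  shows "gLt_term mul n xs ys' i j \<sigma>1 \<sigma>2 =
    mul ((permute_list \<sigma>1 xs)[i := mul (take j (permute_list \<sigma>2 ys') @ [xs ! \<sigma>1 i] @ drop j (permute_list \<sigma>2 ys'))])"
proof -
  have 1: "map (\<lambda>p. xs ! \<sigma>1 p) [0..<n] = permute_list \<sigma>1 xs" using assms(1) by (simp add: permute_list_def)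
  have 2: "map (\<lambda>p. ys' ! \<sigma>2 p) [0..<n - 1] = permute_list \<sigma>2 ys'" using assms(2) by (simp add: permute_list_def)
  have 3: "permute_list \<sigma>1 xs ! i = xs ! \<sigma>1 i" using assms(1,3) by (simp add: permute_list_def)
  show ?thesis unfolding gLt_term_def Let_def 1 2 3
    using upd_conv_take_nth_drop[of i "permute_list \<sigma>1 xs"] assms(1,3) by simp
qed

lemma inner_pos: assumes "length yp = m" "j \<le> m" "y \<in> set yp"
  shows "\<exists>p<Suc m. p \<noteq> j \<and> (take j yp @ [a] @ drop j yp) ! p = y"
proof -
  obtain t where t: "t < m" "yp ! t = y" using assms(1,3) by (metis in_set_conv_nth)
  show ?thesis
  proof (cases "t < j")
    case True
    then have "(take j yp @ [a] @ drop j yp) ! t = y" using t assms by (simp add: nth_append)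
    then show ?thesis using True t by (intro exI[of _ t]) auto
  next
    case False
    then have "(take j yp @ [a] @ drop j yp) ! (Suc t) = y" using t assms by (simp add: nth_append)
    then show ?thesis using False t by (intro exI[of _ "Suc t"]) auto
  qed
qed

lemma inner_facts: assumes "length ys' = n - 1" "j < n" "\<sigma>2 permutes {..<n - 1}"
  shows "length (take j (permute_list \<sigma>2 ys') @ [a] @ drop j (permute_list \<sigma>2 ys')) = n"
    "(take j (permute_list \<sigma>2 ys') @ [a] @ drop j (permute_list \<sigma>2 ys')) ! j = a"
    "set (take j (permute_list \<sigma>2 ys') @ [a] @ drop j (permute_list \<sigma>2 ys')) \<subseteq> insert a (set ys')"
    "y \<in> set ys' \<Longrightarrow> \<exists>p<n. p \<noteq> j \<and> (take j (permute_list \<sigma>2 ys') @ [a] @ drop j (permute_list \<sigma>2 ys')) ! p = y"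
proof -
  have l: "length (permute_list \<sigma>2 ys') = n - 1" using assms by simp
  have s: "set (permute_list \<sigma>2 ys') = set ys'" using assms(1,3) by simp
  show "length (take j (permute_list \<sigma>2 ys') @ [a] @ drop j (permute_list \<sigma>2 ys')) = n"
    using l assms(2) n2 by simp
  show "(take j (permute_list \<sigma>2 ys') @ [a] @ drop j (permute_list \<sigma>2 ys')) ! j = a"
    using l assms(2) by (simp add: nth_append)
  show "set (take j (permute_list \<sigma>2 ys') @ [a] @ drop j (permute_list \<sigma>2 ys')) \<subseteq> insert a (set ys')"
    using s set_take_subset[of j "permute_list \<sigma>2 ys'"] set_drop_subset[of j "permute_list \<sigma>2 ys'"] by auto
  assume "y \<in> set ys'"
  then show "\<exists>p<n. p \<noteq> j \<and> (take j (permute_list \<sigma>2 ys') @ [a] @ drop j (permute_list \<sigma>2 ys')) ! p = y"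
    using inner_pos[OF l, of j y a] s assms(2) n2 by auto
qed

lemma outer_facts: assumes "length xs = n" "\<sigma>1 permutes {..<n}" "i < n"
  shows "length ((permute_list \<sigma>1 xs)[i := v]) = n"
    "(permute_list \<sigma>1 xs)[i := v] ! i = v"
    "set ((permute_list \<sigma>1 xs)[i := v]) \<subseteq> insert v (set xs)"
    "\<exists>p<n. p \<noteq> i \<and> (permute_list \<sigma>1 xs)[i := v] ! p \<in> set xs"
proof -
  have s: "set (permute_list \<sigma>1 xs) = set xs" using assms(1,2) by simp
  show "length ((permute_list \<sigma>1 xs)[i := v]) = n" using assms by simp
  show "(permute_list \<sigma>1 xs)[i := v] ! i = v" using assms by simp
  show "set ((permute_list \<sigma>1 xs)[i := v]) \<subseteq> insert v (set xs)"
    using s set_update_subset_insert by metis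
  define p :: nat where "p = (if i = 0 then 1 else 0)"
  have p: "p < n" "p \<noteq> i" using n2 assms(3) by (auto simp: p_def)
  have "(permute_list \<sigma>1 xs)[i := v] ! p = permute_list \<sigma>1 xs ! p" using p by simp
  also have "\<dots> \<in> set xs" using s p assms(1) by (metis length_permute_list nth_mem)
  finally show "\<exists>p<n. p \<noteq> i \<and> (permute_list \<sigma>1 xs)[i := v] ! p \<in> set xs" using p by blast
qed

end

context thm44 begin

lemma hom_list: assumes "length es = n" "set es \<subseteq> B" shows "\<forall>r<n. \<exists>g. es ! r \<in> Lg g"
proof (intro allI impI)
  fix r assume "r < n"
  then have "es ! r \<in> B" using assms nth_mem by blast
  then show "\<exists>g. es ! r \<in> Lg g" using B_hom by blast
qed

lemma hom_mul: assumes "length es = n" "\<forall>r<n. \<exists>g. es ! r \<in> Lg g" shows "\<exists>g. mul es \<in> Lg g"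
proof -
  define gs where "gs r = (SOME g. es ! r \<in> Lg g)" for r
  have "\<forall>r<n. es ! r \<in> Lg (gs r)"
  proof (intro allI impI)
    fix r assume "r < n"
    then have "\<exists>g. es ! r \<in> Lg g" using assms(2) by blast
    then show "es ! r \<in> Lg (gs r)" unfolding gs_def by (rule someI_ex)
  qed
  then show ?thesis using mul_hom[OF assms(1)] by blast
qed

lemma hom_VCg: assumes "x \<in> VCg C" "C \<subseteq> B" shows "\<exists>g. x \<in> Lg g"
proof -
  obtain es where es: "x = mul es" "length es = n" "set es \<subseteq> C" using assms(1) unfolding VCg_def by blast
  then have "set es \<subseteq> B" using assms(2) by blast
  then show ?thesis using hom_mul[OF es(2) hom_list[OF es(2)]] es(1) by simp
qed

lemma VCg_L: "C \<subseteq> B \<Longrightarrow> VCg C \<subseteq> L" using VCg_V V_L by blast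

lemma M2: assumes C: "C \<in> B // E" and C': "C' \<in> B // E" and CC: "C \<noteq> C'"
  and zs: "length zs = n" "set zs \<subseteq> L" and p: "p < n" "p' < n" "p \<noteq> p'" "zs ! p \<in> C" "zs ! p' \<in> VCg C'"
  shows "mul zs = 0"
proof -
  have CB: "C \<subseteq> B" "C' \<subseteq> B" using cls_sub C C' by auto
  obtain es where es: "zs ! p' = mul es" "length es = n" "set es \<subseteq> C'" using p(5) unfolding VCg_def by blast
  have esB: "set es \<subseteq> B" using es(3) CB by blast
  have esL: "set es \<subseteq> L" using esB B_L by blast
  have "mul zs \<in> {0}"
  proof (rule reduce_hom[OF subspace_single_0, of "{p, p'}"])
    show "{p, p'} \<subseteq> {..<n}" "length zs = n" "set zs \<subseteq> L" using p zs by auto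
    have h1: "\<exists>g. zs ! p \<in> Lg g" using B_hom CB(1) p(4) by blast
    have h2: "\<exists>g. zs ! p' \<in> Lg g" using hom_VCg[OF p(5) CB(2)] .
    show "\<forall>r\<in>{p, p'}. \<exists>g. zs ! r \<in> Lg g" using h1 h2 by simp
    fix ys assume ys: "length ys = n" "set ys \<subseteq> L" "\<forall>r<n. \<exists>g. ys ! r \<in> Lg g" "\<forall>r\<in>{p, p'}. ys ! r = zs ! r"
    show "mul ys \<in> {0}"
    proof (rule IDT[OF subspace_single_0 ys(1) p(2) ys(3) _ es(2) hom_list[OF es(2) esB]])
      show "ys ! p' = mul es" using ys(4) es(1) by simp
      fix i j \<sigma>1 \<sigma>2 assume ij: "i < n" "j < n" and \<sigma>: "\<sigma>1 permutes {..<n}" "\<sigma>2 permutes {..<n - 1}"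
      define ys' where "ys' = take p' ys @ drop (Suc p') ys"
      have ly': "length ys' = n - 1" using ys(1) p(2) by (simp add: ys'_def)
      have ys'L: "set ys' \<subseteq> L" using del_set[of p' ys] ys(2) unfolding ys'_def by (rule subset_trans)
      define a where "a = es ! \<sigma>1 i"
      have "es ! \<sigma>1 i \<in> set es" using es(2) perm_nth_lt[OF \<sigma>(1) ij(1)] by simp
      then have aC: "a \<in> C'" using es(3) unfolding a_def by blast
      have aL: "a \<in> L" using aC CB(2) B_L by blast
      define Il where "Il = take j (permute_list \<sigma>2 ys') @ [a] @ drop j (permute_list \<sigma>2 ys')"
      have Il: "length Il = n" "Il ! j = a" "set Il \<subseteq> insert a (set ys')"
        using inner_facts(1-3)[OF ly' ij(2) \<sigma>(2), of a] unfolding Il_def by auto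
      have cy: "ys ! p \<in> set ys'" unfolding ys'_def using del_mem[OF ys(1) p(2,1,3)] .
      obtain q where q: "q < n" "q \<noteq> j" "Il ! q = ys ! p"
        using inner_facts(4)[OF ly' ij(2) \<sigma>(2) cy, of a] unfolding Il_def by blast
      have IlL: "set Il \<subseteq> L" using Il(3) ys'L aL by blast
      have "mul Il = 0"
        by (rule M1[OF C' C CC[symmetric] Il(1) IlL ij(2) q(1) q(2)[symmetric]]) (use Il(2) aC q(3) ys(4) p(4) in auto)
      then have "gLt_term mul n es ys' i j \<sigma>1 \<sigma>2 = mul ((permute_list \<sigma>1 es)[i := 0])"
        using TS[OF es(2) ly' ij] unfolding Il_def a_def by simp
      also have "\<dots> = 0"
      proof (rule mul_zero')
        show "length ((permute_list \<sigma>1 es)[i := 0]) = n" "(permute_list \<sigma>1 es)[i := 0] ! i = 0"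
          using outer_facts[OF es(2) \<sigma>(1) ij(1)] by auto
        show "set ((permute_list \<sigma>1 es)[i := 0]) \<subseteq> L"
          using outer_facts(3)[OF es(2) \<sigma>(1) ij(1), of 0] esL subspace_0[OF L_subspace] by blast
        show "i < n" by fact
      qed
      finally show "gLt_term mul n es (take p' ys @ drop (Suc p') ys) i j \<sigma>1 \<sigma>2 \<in> {0}" unfolding ys'_def by simp
    qed
  qed
  then show ?thesis by simp
qed


lemma K2: assumes C: "C \<in> B // E" and zs: "length zs = n" "set zs \<subseteq> L" and p: "p < n" "zs ! p \<in> VCg C"
  shows "mul zs \<in> SC C"
proof -
  have CB: "C \<subseteq> B" using cls_sub C by auto
  obtain es where es: "zs ! p = mul es" "length es = n" "set es \<subseteq> C" using p(2) unfolding VCg_def by blast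
  have esB: "set es \<subseteq> B" using es(3) CB by blast
  have esL: "set es \<subseteq> L" using esB B_L by blast
  show ?thesis
  proof (rule reduce_hom[OF SC_subspace, of "{p}"])
    show "{p} \<subseteq> {..<n}" "length zs = n" "set zs \<subseteq> L" using p zs by auto
    have h2: "\<exists>g. zs ! p \<in> Lg g" using hom_VCg[OF p(2) CB] .
    show "\<forall>r\<in>{p}. \<exists>g. zs ! r \<in> Lg g" using h2 by simp
    fix ys assume ys: "length ys = n" "set ys \<subseteq> L" "\<forall>r<n. \<exists>g. ys ! r \<in> Lg g" "\<forall>r\<in>{p}. ys ! r = zs ! r"
    show "mul ys \<in> SC C"
    proof (rule IDT[OF SC_subspace ys(1) p(1) ys(3) _ es(2) hom_list[OF es(2) esB]])
      show "ys ! p = mul es" using ys(4) es(1) by simp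
      fix i j \<sigma>1 \<sigma>2 assume ij: "i < n" "j < n" and \<sigma>: "\<sigma>1 permutes {..<n}" "\<sigma>2 permutes {..<n - 1}"
      define ys' where "ys' = take p ys @ drop (Suc p) ys"
      have ly': "length ys' = n - 1" using ys(1) p(1) by (simp add: ys'_def)
      have ys'L: "set ys' \<subseteq> L" using del_set[of p ys] ys(2) unfolding ys'_def by (rule subset_trans)
      define a where "a = es ! \<sigma>1 i"
      have "es ! \<sigma>1 i \<in> set es" using es(2) perm_nth_lt[OF \<sigma>(1) ij(1)] by simp
      then have aL: "a \<in> L" using esL unfolding a_def by blast
      define Il where "Il = take j (permute_list \<sigma>2 ys') @ [a] @ drop j (permute_list \<sigma>2 ys')"
      have Il: "length Il = n" "set Il \<subseteq> insert a (set ys')"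
        using inner_facts(1,3)[OF ly' ij(2) \<sigma>(2), of a] unfolding Il_def by auto
      have IlL: "set Il \<subseteq> L" using Il(2) ys'L aL by blast
      have mIl: "mul Il \<in> L" using mul_L[OF Il(1) IlL] .
      define Ol where "Ol = (permute_list \<sigma>1 es)[i := mul Il]"
      have Ol: "length Ol = n" "set Ol \<subseteq> insert (mul Il) (set es)" "\<exists>p<n. p \<noteq> i \<and> Ol ! p \<in> set es"
        using outer_facts(1,3,4)[OF es(2) \<sigma>(1) ij(1), of "mul Il"] unfolding Ol_def by auto
      have OL: "set Ol \<subseteq> L" using Ol(2) mIl esL by blast
      obtain p0 where p0: "p0 < n" "Ol ! p0 \<in> set es" using Ol(3) by blast
      have "mul Ol \<in> SC C" by (rule K[OF C Ol(1) OL p0(1)]) (use p0(2) es(3) in blast)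
      moreover have "gLt_term mul n es ys' i j \<sigma>1 \<sigma>2 = mul Ol"
        using TS[OF es(2) ly' ij] unfolding Ol_def Il_def a_def by simp
      ultimately show "gLt_term mul n es (take p ys @ drop (Suc p) ys) i j \<sigma>1 \<sigma>2 \<in> SC C" unfolding ys'_def by simp
    qed
  qed
qed

lemma IdealGen: assumes C: "C \<in> B // E" and zs: "length zs = n" "set zs \<subseteq> L" and p: "p < n" "zs ! p \<in> SC C"
  shows "mul zs \<in> SC C"
proof (rule span_pos[OF SC_subspace zs p(1)])
  have CB: "C \<subseteq> B" using cls_sub C by auto
  show "C \<union> VCg C \<subseteq> L" using CB B_L VCg_L[OF CB] by blast
  show "zs ! p \<in> span (C \<union> VCg C)" using p(2) SC_span by simp
  fix a assume a: "a \<in> C \<union> VCg C"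
  then have aL: "a \<in> L" using CB B_L VCg_L[OF CB] by blast
  have l: "length (zs[p := a]) = n" "set (zs[p := a]) \<subseteq> L" "zs[p := a] ! p = a"
    using zs p(1) set_upd_L[OF zs(2) aL] by auto
  show "mul (zs[p := a]) \<in> SC C"
  proof (cases "a \<in> C")
    case True then show ?thesis using K[OF C l(1,2) p(1)] l(3) by simp
  next
    case False then show ?thesis using K2[OF C l(1,2) p(1)] l(3) a by simp
  qed
qed

lemma M3: assumes C: "C \<in> B // E" and C': "C' \<in> B // E" and CC: "C \<noteq> C'"
  and zs: "length zs = n" "set zs \<subseteq> L" and p: "p < n" "p' < n" "p \<noteq> p'" "zs ! p \<in> VCg C" "zs ! p' \<in> VCg C'"
  shows "mul zs = 0"
proof -
  have CB: "C \<subseteq> B" "C' \<subseteq> B" using cls_sub C C' by auto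
  obtain es where es: "zs ! p = mul es" "length es = n" "set es \<subseteq> C" using p(4) unfolding VCg_def by blast
  have esB: "set es \<subseteq> B" using es(3) CB by blast
  have esL: "set es \<subseteq> L" using esB B_L by blast
  have "mul zs \<in> {0}"
  proof (rule reduce_hom[OF subspace_single_0, of "{p, p'}"])
    show "{p, p'} \<subseteq> {..<n}" "length zs = n" "set zs \<subseteq> L" using p zs by auto
    have h1: "\<exists>g. zs ! p \<in> Lg g" using hom_VCg[OF p(4) CB(1)] .
    have h2: "\<exists>g. zs ! p' \<in> Lg g" using hom_VCg[OF p(5) CB(2)] .
    show "\<forall>r\<in>{p, p'}. \<exists>g. zs ! r \<in> Lg g" using h1 h2 by simp
    fix ys assume ys: "length ys = n" "set ys \<subseteq> L" "\<forall>r<n. \<exists>g. ys ! r \<in> Lg g" "\<forall>r\<in>{p, p'}. ys ! r = zs ! r"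
    show "mul ys \<in> {0}"
    proof (rule IDT[OF subspace_single_0 ys(1) p(1) ys(3) _ es(2) hom_list[OF es(2) esB]])
      show "ys ! p = mul es" using ys(4) es(1) by simp
      fix i j \<sigma>1 \<sigma>2 assume ij: "i < n" "j < n" and \<sigma>: "\<sigma>1 permutes {..<n}" "\<sigma>2 permutes {..<n - 1}"
      define ys' where "ys' = take p ys @ drop (Suc p) ys"
      have ly': "length ys' = n - 1" using ys(1) p(1) by (simp add: ys'_def)
      have ys'L: "set ys' \<subseteq> L" using del_set[of p ys] ys(2) unfolding ys'_def by (rule subset_trans)
      define a where "a = es ! \<sigma>1 i"
      have "es ! \<sigma>1 i \<in> set es" using es(2) perm_nth_lt[OF \<sigma>(1) ij(1)] by simp
      then have aC: "a \<in> C" using es(3) unfolding a_def by blast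
      have aL: "a \<in> L" using aC CB(1) B_L by blast
      define Il where "Il = take j (permute_list \<sigma>2 ys') @ [a] @ drop j (permute_list \<sigma>2 ys')"
      have Il: "length Il = n" "Il ! j = a" "set Il \<subseteq> insert a (set ys')"
        using inner_facts(1-3)[OF ly' ij(2) \<sigma>(2), of a] unfolding Il_def by auto
      have cy: "ys ! p' \<in> set ys'" unfolding ys'_def using del_mem[OF ys(1) p(1,2)] p(3) by simp
      obtain q where q: "q < n" "q \<noteq> j" "Il ! q = ys ! p'"
        using inner_facts(4)[OF ly' ij(2) \<sigma>(2) cy, of a] unfolding Il_def by blast
      have IlL: "set Il \<subseteq> L" using Il(3) ys'L aL by blast
      have "mul Il = 0"
        by (rule M2[OF C C' CC Il(1) IlL ij(2) q(1) q(2)[symmetric]]) (use Il(2) aC q(3) ys(4) p(5) in auto)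
      then have "gLt_term mul n es ys' i j \<sigma>1 \<sigma>2 = mul ((permute_list \<sigma>1 es)[i := 0])"
        using TS[OF es(2) ly' ij] unfolding Il_def a_def by simp
      also have "\<dots> = 0"
      proof (rule mul_zero')
        show "length ((permute_list \<sigma>1 es)[i := 0]) = n" "(permute_list \<sigma>1 es)[i := 0] ! i = 0"
          using outer_facts(1,2)[OF es(2) \<sigma>(1) ij(1)] by auto
        show "set ((permute_list \<sigma>1 es)[i := 0]) \<subseteq> L"
          using outer_facts(3)[OF es(2) \<sigma>(1) ij(1), of 0] esL subspace_0[OF L_subspace] by blast
        show "i < n" by fact
      qed
      finally show "gLt_term mul n es (take p ys @ drop (Suc p) ys) i j \<sigma>1 \<sigma>2 \<in> {0}" unfolding ys'_def by simp
    qed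
  qed
  then show ?thesis by simp
qed

lemma Mix: assumes C: "C \<in> B // E" and C': "C' \<in> B // E" and CC: "C \<noteq> C'"
  and zs: "length zs = n" "set zs \<subseteq> L" and p: "p < n" "p' < n" "p \<noteq> p'" "zs ! p \<in> SC C" "zs ! p' \<in> SC C'"
  shows "mul zs = 0"
proof -
  have CB: "C \<subseteq> B" "C' \<subseteq> B" using cls_sub C C' by auto
  have GL: "C \<union> VCg C \<subseteq> L" "C' \<union> VCg C' \<subseteq> L" using CB B_L VCg_L[OF CB(1)] VCg_L[OF CB(2)] by blast+
  have "mul zs \<in> {0}"
  proof (rule span_pos[OF subspace_single_0 zs p(1) GL(1)])
    show "zs ! p \<in> span (C \<union> VCg C)" using p(4) SC_span by simp
    fix a assume a: "a \<in> C \<union> VCg C"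
    then have aL: "a \<in> L" using GL by blast
    define zs1 where "zs1 = zs[p := a]"
    have l1: "length zs1 = n" "set zs1 \<subseteq> L" "zs1 ! p = a" "zs1 ! p' = zs ! p'"
      using zs p set_upd_L[OF zs(2) aL] unfolding zs1_def by auto
    show "mul zs1 \<in> {0}" unfolding zs1_def[symmetric]
    proof (rule span_pos[OF subspace_single_0 l1(1,2) p(2) GL(2)])
      show "zs1 ! p' \<in> span (C' \<union> VCg C')" using p(5) l1(4) SC_span by simp
      fix b assume b: "b \<in> C' \<union> VCg C'"
      then have bL: "b \<in> L" using GL by blast
      define zs2 where "zs2 = zs1[p' := b]"
      have l2: "length zs2 = n" "set zs2 \<subseteq> L" "zs2 ! p = a" "zs2 ! p' = b"
        using l1 p set_upd_L[OF l1(2) bL] unfolding zs2_def by auto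
      have "mul zs2 = 0"
      proof (cases "a \<in> C")
        case aC: True
        show ?thesis
        proof (cases "b \<in> C'")
          case True then show ?thesis using M1[OF C C' CC l2(1,2) p(1,2,3)] aC l2(3,4) by simp
        next
          case False then show ?thesis using M2[OF C C' CC l2(1,2) p(1,2,3)] aC b l2(3,4) by simp
        qed
      next
        case aV: False
        then have aV': "a \<in> VCg C" using a by blast
        show ?thesis
        proof (cases "b \<in> C'")
          case True then show ?thesis using M2[OF C' C CC[symmetric] l2(1,2) p(2,1) p(3)[symmetric]] aV' l2(3,4) by simp
        next
          case False then show ?thesis using M3[OF C C' CC l2(1,2) p(1,2,3)] aV' b l2(3,4) by simp
        qed
      qed
      then show "mul (zs1[p' := b]) \<in> {0}" unfolding zs2_def by simp
    qed
  qed
  then show ?thesis by simp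
qed

end

context thm44 begin

lemma graded_of_gens: assumes "U = span G" "\<forall>x\<in>G. \<exists>g. x \<in> Lg g"
  shows "graded_subspace scale Lg U"
  unfolding graded_subspace_def
proof
  show "subspace U" using assms(1) by simp
  have "G \<subseteq> (\<Union>g. U \<inter> Lg g)" using assms span_superset by blast
  then have "span G \<subseteq> span (\<Union>g. U \<inter> Lg g)" by (rule span_mono)
  moreover have "span (\<Union>g. U \<inter> Lg g) \<subseteq> U" using assms(1) by (intro span_minimal) auto
  ultimately show "U = span (\<Union>g. U \<inter> Lg g)" using assms(1) by blast
qed

lemma SC_B: assumes "C \<subseteq> B" "e \<in> B" "e \<in> SC C" shows "e \<in> C"
proof -
  obtain v w where vw: "e = v + w" "v \<in> VC C" "w \<in> span C" using assms(3) unfolding SC_def setsum_def by blast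
  have wB: "w \<in> span B" using vw(3) span_mono[OF assms(1)] by blast
  have "v = e - w" using vw(1) by simp
  moreover have "e - w \<in> span B" using span_diff[OF span_base[OF assms(2)] wB] .
  moreover have "v \<in> V" using vw(2) VC_V by blast
  ultimately have "v \<in> V \<inter> span B" by simp
  then have "v = 0" using VB0 by blast
  then have "e \<in> span C" using vw by simp
  then show ?thesis using B_sub_span[OF assms(1,2)] by blast
qed

lemma SC_V: assumes "C \<subseteq> B" "x \<in> V" "x \<in> SC C" shows "x \<in> VC C"
proof -
  obtain v w where vw: "x = v + w" "v \<in> VC C" "w \<in> span C" using assms(3) unfolding SC_def setsum_def by blast
  have wB: "w \<in> span B" using vw(3) span_mono[OF assms(1)] by blast
  have vV: "v \<in> V" using vw(2) VC_V by blast
  have "w = x - v" using vw(1) by simp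
  then have "w \<in> V" using subspace_diff[OF V_subspace assms(2) vV] by simp
  then have "w = 0" using wB VB0 by blast
  then show ?thesis using vw by simp
qed

lemma gp_mono: assumes "\<sigma> permutes {..<n}" "\<forall>r<n. As ! r \<subseteq> As' ! r" shows "gp \<sigma> As \<subseteq> gp \<sigma> As'"
  unfolding GP[OF assms(1)]
proof (rule span_mono, rule subsetI)
  fix y assume "y \<in> {mul zs |zs. length zs = n \<and> (\<forall>p<n. zs ! p \<in> As ! \<sigma> p)}"
  then obtain zs where zs: "y = mul zs" "length zs = n" "\<forall>p<n. zs ! p \<in> As ! \<sigma> p" by blast
  have "\<forall>p<n. zs ! p \<in> As' ! \<sigma> p" using zs(3) assms(2) perm_nth_lt[OF assms(1)] by blast
  then show "y \<in> {mul zs |zs. length zs = n \<and> (\<forall>p<n. zs ! p \<in> As' ! \<sigma> p)}" using zs(1,2) by blast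
qed

definition Vga where "Vga = {mul es | es. length es = n \<and> set es \<subseteq> B \<and> mul es \<in> V}"

lemma Vga_V: "Vga \<subseteq> V" unfolding Vga_def by blast

lemma V_span: "V \<subseteq> span Vga"
proof -
  have "V = {0} \<or> V = span {mul es | es. length es = n \<and> set es \<subseteq> B \<and>
            mu_map scale n mul V B False (Some (hd es)) False (map Some (tl es)) = {None}}"
    using tgt unfolding tight_def .
  then show ?thesis
  proof
    assume "V = {0}" then show ?thesis using span_zero by blast
  next
    assume V: "V = span {mul es | es. length es = n \<and> set es \<subseteq> B \<and>
            mu_map scale n mul V B False (Some (hd es)) False (map Some (tl es)) = {None}}"
    have "{mul es | es. length es = n \<and> set es \<subseteq> B \<and>
            mu_map scale n mul V B False (Some (hd es)) False (map Some (tl es)) = {None}} \<subseteq> Vga"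
    proof (rule subsetI)
      fix y assume "y \<in> {mul es | es. length es = n \<and> set es \<subseteq> B \<and>
            mu_map scale n mul V B False (Some (hd es)) False (map Some (tl es)) = {None}}"
      then obtain es where ydef: "y = mul es" and es: "length es = n" "set es \<subseteq> B" "mu_map scale n mul V B False (Some (hd es)) False (map Some (tl es)) = {None}" by blast
      have ne: "es \<noteq> []" using es(1) n2 by auto
      have hs: "Some (hd es) # map Some (tl es) = map Some es" using ne by (cases es) auto
      have U: "(\<Union>\<sigma>\<in>{\<sigma>. \<sigma> permutes {..<n}}. a_map scale n mul V B \<sigma> (map Some es)) = {None}"
        using es(3) hs by (simp add: mu_map_def)
      have a_sub: "a_map scale n mul V B id (map Some es) \<subseteq> {None}"
        using U permutes_id[of "{..<n}"] by blast
      have ljs: "length (map Some es) = n" "set (map Some es) \<subseteq> idx_set B" using es by (auto simp: idx_set_def)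
      have m: "mul es \<in> gp id (map (u_of V) (map Some es))"
        by (rule GP_mem[OF permutes_id es(1)]) (use es(1) in \<open>auto simp: u_of_def\<close>)
      have "mul es \<in> V"
      proof (cases "mul es = 0")
        case True then show ?thesis using subspace_0[OF V_subspace] by simp
      next
        case False
        then have P0: "gp id (map (u_of V) (map Some es)) \<noteq> {0}" using m by blast
        from Qgen[OF permutes_id ljs] show ?thesis
        proof
          assume "\<exists>e\<in>B. gp id (map (u_of V) (map Some es)) \<subseteq> line scale e"
          then obtain e where "e \<in> B" "gp id (map (u_of V) (map Some es)) \<subseteq> line scale e" by blast
          then have "a_map scale n mul V B id (map Some es) = {Some e}" using amap_line P0 by blast
          then show ?thesis using a_sub by simp
        next
          assume "gp id (map (u_of V) (map Some es)) \<subseteq> V \<and> (None \<notin> set (map Some es) \<or> set (map Some es) \<subseteq> {None})"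
          then show ?thesis using m by blast
        qed
      qed
      then show "y \<in> Vga" unfolding Vga_def using es ydef by blast
    qed
    then have "span {mul es | es. length es = n \<and> set es \<subseteq> B \<and>
            mu_map scale n mul V B False (Some (hd es)) False (map Some (tl es)) = {None}} \<subseteq> span Vga"
      by (rule span_mono)
    then show ?thesis using V by simp
  qed
qed

lemma Vga_class: assumes "y \<in> Vga" "y \<noteq> 0" shows "\<exists>C\<in>B // E. y \<in> VCg C"
proof -
  obtain es where es: "y = mul es" "length es = n" "set es \<subseteq> B" "mul es \<in> V" using assms(1) unfolding Vga_def by blast
  have ne: "es \<noteq> []" using es(2) n2 by auto
  have hB: "hd es \<in> B" using ne es(3) by (cases es) auto
  define C where "C = E `` {hd es}"
  have C: "C \<in> B // E" "hd es \<in> C" using cls_of hB unfolding C_def by auto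
  have "set es \<subseteq> C"
  proof
    fix z assume "z \<in> set es"
    then have "(z, hd es) \<in> E" using Vprod_class[OF es(2,3,4)] assms(2) es(1) by blast
    then show "z \<in> C" using cls_closed[OF C(1,2)] E_sym by blast
  qed
  then have "y \<in> VCg C" unfolding VCg_def using es by blast
  then show ?thesis using C(1) by blast
qed

definition Gall where "Gall = (\<Union>C\<in>B // E. SC C)"

lemma Gall_L: "Gall \<subseteq> L" unfolding Gall_def using SC_L cls_sub by blast

lemma L_span_Gall: "L \<subseteq> span Gall"
proof
  fix x assume "x \<in> L"
  then obtain v w where vw: "x = v + w" "v \<in> V" "w \<in> span B" using L_dec by (auto simp: setsum_def)
  have BG: "B \<subseteq> Gall"
  proof
    fix b assume b: "b \<in> B"
    then have "E `` {b} \<in> B // E" "b \<in> E `` {b}" using cls_of by auto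
    then show "b \<in> Gall" unfolding Gall_def using C_SC by blast
  qed
  have VG: "Vga \<subseteq> span Gall"
  proof
    fix y assume y: "y \<in> Vga"
    show "y \<in> span Gall"
    proof (cases "y = 0")
      case True then show ?thesis using span_zero by simp
    next
      case False
      then obtain C where "C \<in> B // E" "y \<in> VCg C" using Vga_class y by blast
      then have "y \<in> Gall" unfolding Gall_def using VCg_SC by blast
      then show ?thesis by (rule span_base)
    qed
  qed
  have "v \<in> span Gall" using vw(2) V_span span_mono[OF VG] by (auto simp: span_span)
  moreover have "w \<in> span Gall" using vw(3) span_mono[OF BG] by blast
  ultimately show "x \<in> span Gall" using vw(1) span_add by blast
qed

lemma pos0: assumes \<sigma>: "\<sigma> permutes {..<n}" and zs: "\<forall>q<n. zs ! q \<in> (A # replicate (n - 1) A') ! (\<sigma> q)"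
  shows "inv \<sigma> 0 < n" "zs ! (inv \<sigma> 0) \<in> A" "\<And>q. q < n \<Longrightarrow> q \<noteq> inv \<sigma> 0 \<Longrightarrow> zs ! q \<in> A'"
proof -
  have n0: "0 < n" using n2 by simp
  show q0: "inv \<sigma> 0 < n" using permutes_in_image[OF permutes_inv[OF \<sigma>]] n0 by simp
  have "\<sigma> (inv \<sigma> 0) = 0" using permutes_inverses(1)[OF \<sigma>] by simp
  then show "zs ! (inv \<sigma> 0) \<in> A" using zs q0 by (metis nth_Cons_0)
  fix q assume q: "q < n" "q \<noteq> inv \<sigma> 0"
  have sq: "\<sigma> q < n" using perm_nth_lt[OF \<sigma> q(1)] .
  have "\<sigma> q \<noteq> 0" using q(2) permutes_inverses(2)[OF \<sigma>] by metis
  then have "(A # replicate (n - 1) A') ! (\<sigma> q) = A'" using sq by (cases "\<sigma> q") auto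
  then show "zs ! q \<in> A'" using zs q(1) by metis
qed

lemma pos_mem: assumes zs: "length zs = n" "p < n" "zs ! p \<in> A" "\<And>q. q < n \<Longrightarrow> q \<noteq> p \<Longrightarrow> zs ! q \<in> A'"
  shows "mul zs \<in> gp (Transposition.transpose 0 p) (A # replicate (n - 1) A')"
proof (rule GP_mem[OF _ zs(1)])
  have n0: "0 < n" using n2 by simp
  show t: "Transposition.transpose 0 p permutes {..<n}" by (rule permutes_swap_id) (use n0 zs(2) in auto)
  show "\<forall>q<n. zs ! q \<in> (A # replicate (n - 1) A') ! (Transposition.transpose 0 p q)"
  proof (intro allI impI)
    fix q assume q: "q < n"
    show "zs ! q \<in> (A # replicate (n - 1) A') ! (Transposition.transpose 0 p q)"
    proof (cases "q = p")
      case True then show ?thesis using zs(3) by simp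
    next
      case False
      have tq: "Transposition.transpose 0 p q \<noteq> 0" using False by (simp add: transpose_def)
      have tn: "Transposition.transpose 0 p q < n" using perm_nth_lt[OF t q] .
      have "(A # replicate (n - 1) A') ! (Transposition.transpose 0 p q) = A'"
        using tq tn by (cases "Transposition.transpose 0 p q") auto
      then show ?thesis using zs(4)[OF q False] by simp
    qed
  qed
qed

end

context thm44 begin

lemma KI: assumes C: "C \<in> B // E" and I: "I \<subseteq> SC C" "subspace I"
  and Iid: "\<forall>\<sigma>. \<sigma> permutes {..<n} \<longrightarrow> gp \<sigma> (I # replicate (n - 1) (SC C)) \<subseteq> I"
  and x: "x \<in> I" "x \<in> C" and zs: "length zs = n" "set zs \<subseteq> L" and p: "p < n" "zs ! p = x"
  shows "mul zs \<in> I"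
proof (rule MR[OF I(2) Gall_L, of "{..<n} - {p}"])
  show "{..<n} - {p} \<subseteq> {..<n}" "length zs = n" "set zs \<subseteq> L" using zs by auto
  show "\<forall>r\<in>{..<n} - {p}. zs ! r \<in> span Gall"
  proof
    fix r assume "r \<in> {..<n} - {p}"
    then have "zs ! r \<in> L" using zs nth_mem by fastforce
    then show "zs ! r \<in> span Gall" using L_span_Gall by blast
  qed
  fix ys assume ys: "length ys = n" "set ys \<subseteq> L" "\<forall>r<n. r \<notin> {..<n} - {p} \<longrightarrow> ys ! r = zs ! r" "\<forall>r\<in>{..<n} - {p}. ys ! r \<in> Gall"
  have yp: "ys ! p = x" using ys(3) p by simp
  have xSC: "x \<in> SC C" using x(2) C_SC by blast
  show "mul ys \<in> I"
  proof (cases "\<exists>r<n. r \<noteq> p \<and> ys ! r \<notin> SC C")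
    case True
    then obtain r where r: "r < n" "r \<noteq> p" "ys ! r \<notin> SC C" by blast
    then have "ys ! r \<in> Gall" using ys(4) by blast
    then obtain C' where C': "C' \<in> B // E" "ys ! r \<in> SC C'" unfolding Gall_def by blast
    have "C' \<noteq> C" using r(3) C'(2) by blast
    then have "mul ys = 0" using Mix[OF C C'(1) _ ys(1,2) p(1) r(1) r(2)[symmetric]] yp xSC C'(2) by simp
    then show ?thesis using subspace_0[OF I(2)] by simp
  next
    case False
    then have o: "\<And>q. q < n \<Longrightarrow> q \<noteq> p \<Longrightarrow> ys ! q \<in> SC C" by blast
    have "mul ys \<in> gp (Transposition.transpose 0 p) (I # replicate (n - 1) (SC C))"
      by (rule pos_mem[OF ys(1) p(1)]) (use yp x(1) o in auto)
    moreover have "Transposition.transpose 0 p permutes {..<n}" by (rule permutes_swap_id) (use n2 p(1) in auto)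
    ultimately show ?thesis using Iid by blast
  qed
qed

definition tag where "tag w = (if w \<in> B then Some w else None)"

lemma tag_u: "w \<in> B \<union> V \<Longrightarrow> w \<in> u_of V (tag w)"
  by (auto simp: tag_def u_of_def)

lemma tag_idx: "tag w \<in> idx_set B"
  by (auto simp: tag_def idx_set_def)

lemma u_of_BV: "j \<in> idx_set B \<Longrightarrow> u_of V j \<subseteq> B \<union> V"
  by (auto simp: idx_set_def u_of_def)

lemma rev_step: assumes C: "C \<in> B // E" and I: "I \<subseteq> SC C" "subspace I"
  and Iid: "\<forall>\<sigma>. \<sigma> permutes {..<n} \<longrightarrow> gp \<sigma> (I # replicate (n - 1) (SC C)) \<subseteq> I"
  and y: "y \<in> I" "y \<in> C" and R: "Rb z y"
  shows "z \<in> I"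
proof -
  obtain zs s where zs: "length zs = n" "set zs \<subseteq> B \<union> V" "z \<in> set zs" "s \<noteq> 0" "mul zs = s *s y"
    and zB: "z \<in> B" and yB: "y \<in> B" using R unfolding Rb_def by blast
  obtain p0 where p0: "p0 < n" "zs ! p0 = z" using zs(1,3) by (metis in_set_conv_nth)
  define rest where "rest = take p0 zs @ drop (Suc p0) zs"
  define xs0 where "xs0 = z # rest"
  have e: "zs = take p0 zs @ zs ! p0 # drop (Suc p0) zs" by (rule id_take_nth_drop) (use p0(1) zs(1) in simp)
  have "mset zs = mset (take p0 zs @ zs ! p0 # drop (Suc p0) zs)" using arg_cong[OF e, of mset] .
  then have ms: "mset zs = mset xs0" unfolding xs0_def rest_def using p0(2) by simp
  obtain \<sigma> where \<sigma>0: "\<sigma> permutes {..<length xs0}" "permute_list \<sigma> xs0 = zs"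
    using mset_eq_permutation[OF ms] by blast
  have lx: "length xs0 = n" using ms zs(1) by (metis mset_eq_length)
  have \<sigma>: "\<sigma> permutes {..<n}" using \<sigma>0(1) lx by simp
  have zsq: "q < n \<Longrightarrow> zs ! q = xs0 ! \<sigma> q" for q
    using permute_list_nth[OF \<sigma>0(1), of q] \<sigma>0(2) lx by simp
  have sx: "set xs0 = set zs" using ms by (metis set_mset_mset)
  define ks where "ks = map tag rest"
  have lr: "length rest = n - 1" using p0(1) zs(1) by (simp add: rest_def)
  have js: "map tag xs0 = Some z # ks" using zB by (simp add: xs0_def ks_def tag_def)
  have ljs: "length (Some z # ks) = n" using lr n2 by (simp add: ks_def)
  have sjs: "set (Some z # ks) \<subseteq> idx_set B" using zB tag_idx by (auto simp: ks_def idx_set_def)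
  have mP: "mul zs \<in> gp \<sigma> (map (u_of V) (Some z # ks))"
  proof (rule GP_mem[OF \<sigma> zs(1)], intro allI impI)
    fix q assume q: "q < n"
    have sq: "\<sigma> q < n" using perm_nth_lt[OF \<sigma> q] .
    have "xs0 ! \<sigma> q \<in> B \<union> V" using sx zs(2) sq lx nth_mem by blast
    then have "xs0 ! \<sigma> q \<in> u_of V (tag (xs0 ! \<sigma> q))" by (rule tag_u)
    moreover have "map (u_of V) (Some z # ks) ! \<sigma> q = u_of V (tag (xs0 ! \<sigma> q))"
      using js[symmetric] sq lx by simp
    ultimately show "zs ! q \<in> map (u_of V) (Some z # ks) ! \<sigma> q" using zsq[OF q] by simp
  qed
  have y0: "y \<noteq> 0" using yB zero_notin_B by auto
  have m0: "mul zs \<noteq> 0" using zs(4,5) y0 by simp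
  have mly: "mul zs \<in> line scale y" using zs(5) by (auto simp: line_mem)
  have mnV: "mul zs \<notin> V" using line_V[OF yB mly] m0 by blast
  from Qgen[OF \<sigma> ljs sjs] obtain e where e: "e \<in> B" "gp \<sigma> (map (u_of V) (Some z # ks)) \<subseteq> line scale e"
    using mP mnV by blast
  have "e = y" using line_B_unique[OF e(1) yB m0] e(2) mP mly by blast
  then have am: "a_map scale n mul V B \<sigma> (Some z # ks) = {Some y}"
    using amap_line[OF _ _ yB] e(2) mP m0 by blast
  have "Some z \<in> b_map scale n mul V B \<sigma> (Some y) ks"
    unfolding b_map_def using am zB by (auto simp: idx_set_def)
  then have "Some z \<in> mu_map scale n mul V B False (Some y) True ks"
    using \<sigma> by (simp add: mu_map_def) blast
  moreover have "Some y \<in> idx_set B" using yB by (simp add: idx_set_def)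
  moreover have "set ks \<subseteq> idx_set B" "length ks = n - 1" using sjs lr by (auto simp: ks_def)
  ultimately obtain \<sigma>' where \<sigma>': "\<sigma>' permutes {..<n}" "z \<in> gp \<sigma>' (map (u_of V) (Some y # ks))"
    using muqD[OF zB] by blast
  have "gp \<sigma>' (map (u_of V) (Some y # ks)) \<subseteq> I"
  proof (rule GP_sub[OF \<sigma>'(1) I(2)])
    fix zs' assume zs': "length zs' = n" "\<forall>p<n. zs' ! p \<in> map (u_of V) (Some y # ks) ! \<sigma>' p"
    have lk: "length (Some y # ks) = n" using ljs by simp
    have sk: "set (Some y # ks) \<subseteq> idx_set B" using \<open>set ks \<subseteq> idx_set B\<close> \<open>Some y \<in> idx_set B\<close> by simp
    have L': "set zs' \<subseteq> L"
    proof
      fix w assume "w \<in> set zs'"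
      then obtain q where q: "q < n" "w = zs' ! q" using zs'(1) by (metis in_set_conv_nth)
      have sq: "\<sigma>' q < n" using perm_nth_lt[OF \<sigma>'(1) q(1)] .
      have "(Some y # ks) ! \<sigma>' q \<in> idx_set B" using sk lk sq nth_mem by blast
      moreover have "w \<in> map (u_of V) (Some y # ks) ! \<sigma>' q" using zs'(2) q by blast
      then have "w \<in> u_of V ((Some y # ks) ! \<sigma>' q)" using sq lk by (metis nth_map)
      ultimately show "w \<in> L" using u_of_BV BV_L by blast
    qed
    have q0: "inv \<sigma>' 0 < n" using permutes_in_image[OF permutes_inv[OF \<sigma>'(1)]] n2 by simp
    have "\<sigma>' (inv \<sigma>' 0) = 0" using permutes_inverses(1)[OF \<sigma>'(1)] by simp
    moreover have "zs' ! inv \<sigma>' 0 \<in> map (u_of V) (Some y # ks) ! \<sigma>' (inv \<sigma>' 0)" using zs'(2) q0 by blast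
    ultimately have "zs' ! inv \<sigma>' 0 = y" by (simp add: u_of_def)
    then show "mul zs' \<in> I" using KI[OF C I Iid y zs'(1) L' q0] by simp
  qed
  then show ?thesis using \<sigma>'(2) by blast
qed

lemma minimal: assumes C: "C \<in> B // E" shows "minimal_alg scale n mul (SC C) Lg (VC C) C"
  unfolding minimal_alg_def
proof (intro allI impI)
  fix I VI BI assume I0: "I \<noteq> {0}" and Iid0: "gLt_ideal scale n mul (SC C) Lg I"
    and inh: "inherited_basis scale Lg (VC C) C I VI BI"
  have CB: "C \<subseteq> B" using cls_sub[OF C] .
  have ISC: "I \<subseteq> SC C" using Iid0 unfolding gLt_ideal_def by blast
  have Isub: "subspace I" using Iid0 unfolding gLt_ideal_def graded_subspace_def by blast
  have Iid: "\<forall>\<sigma>. \<sigma> permutes {..<n} \<longrightarrow> gp \<sigma> (I # replicate (n - 1) (SC C)) \<subseteq> I"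
    using Iid0 unfolding gLt_ideal_def by blast
  have BIC: "BI \<subseteq> C" and BIne: "BI \<noteq> {}" and Idec: "I = setsum VI (span BI)"
    and VIs: "subspace VI" using inh unfolding inherited_basis_def graded_subspace_def by blast+
  have BII: "BI \<subseteq> I"
  proof
    fix b assume "b \<in> BI"
    then have "b = 0 + b" "0 \<in> VI" "b \<in> span BI" using subspace_0[OF VIs] span_base by auto
    then show "b \<in> I" unfolding Idec setsum_def by blast
  qed
  obtain c0 where c0: "c0 \<in> BI" using BIne by blast
  have c0C: "c0 \<in> C" and c0I: "c0 \<in> I" using c0 BIC BII by auto
  have CI: "C \<subseteq> I"
  proof
    fix c assume cC: "c \<in> C"
    have "(c0, c) \<in> E" using cls_E[OF C c0C cC] .
    then have "(c0, c) \<in> Sr\<^sup>*" unfolding E_def by blast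
    then show "c \<in> I"
    proof (induction rule: rtrancl_induct)
      case base
      then show ?case using c0I .
    next
      case (step y z)
      have yB: "y \<in> B" using step.hyps(2) unfolding Sr_def Rb_def by blast
      have c0B: "c0 \<in> B" using c0C CB by blast
      have "(c0, y) \<in> E" using step.hyps(1) yB c0B unfolding E_def by blast
      then have yC: "y \<in> C" using cls_closed[OF C c0C] by blast
      from step.hyps(2) have "Rb y z \<or> Rb z y" unfolding Sr_def by blast
      then show ?case
      proof
        assume R: "Rb y z"
        obtain zs s where zs: "length zs = n" "set zs \<subseteq> B \<union> V" "y \<in> set zs" "s \<noteq> 0" "mul zs = s *s z"
          using R unfolding Rb_def by blast
        obtain p where p: "p < n" "zs ! p = y" using zs(1,3) by (metis in_set_conv_nth)
        have "set zs \<subseteq> L" using zs(2) BV_L by blast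
        then have "mul zs \<in> I" using KI[OF C ISC Isub Iid step.IH yC zs(1) _ p] by blast
        then show ?case using scale_in_sub[OF Isub _ zs(4)] zs(5) by simp
      next
        assume R: "Rb z y"
        show ?case by (rule rev_step[OF C ISC Isub Iid step.IH yC R])
      qed
    qed
  qed
  have "C \<union> VCg C \<subseteq> I"
  proof
    fix w assume "w \<in> C \<union> VCg C"
    then show "w \<in> I"
    proof
      assume "w \<in> C" then show ?thesis using CI by blast
    next
      assume "w \<in> VCg C"
      then obtain es where es: "w = mul es" "length es = n" "set es \<subseteq> C" unfolding VCg_def by blast
      have n0: "0 < n" using n2 by simp
      have e0: "es ! 0 \<in> C" using es(2,3) n0 nth_mem by blast
      have "set es \<subseteq> L" using es(3) CB B_L by blast
      then show ?thesis using KI[OF C ISC Isub Iid _ e0 es(2) _ n0] CI e0 es(1) by blast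
    qed
  qed
  then have "SC C \<subseteq> I" unfolding SC_span using span_minimal[OF _ Isub] by blast
  then show "I = SC C" using ISC by blast
qed

end

context thm44 begin

lemma idx_C_B: "C \<subseteq> B \<Longrightarrow> idx_set C \<subseteq> idx_set B"
  by (auto simp: idx_set_def)

lemma RL: assumes C: "C \<in> B // E" and \<sigma>: "\<sigma> permutes {..<n}" and js: "length js = n" "set js \<subseteq> idx_set C" and c: "Some c \<in> set js"
  shows "gp \<sigma> (map (u_of (VC C)) js) = gp \<sigma> (map (u_of V) js)"
proof
  have CB: "C \<subseteq> B" using cls_sub[OF C] .
  show "gp \<sigma> (map (u_of (VC C)) js) \<subseteq> gp \<sigma> (map (u_of V) js)"
  proof (rule gp_mono[OF \<sigma>], intro allI impI)
    fix r assume "r < n"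
    then show "map (u_of (VC C)) js ! r \<subseteq> map (u_of V) js ! r" using js(1) VC_V by (auto simp: u_of_def split: option.splits)
  qed
  show "gp \<sigma> (map (u_of V) js) \<subseteq> gp \<sigma> (map (u_of (VC C)) js)"
  proof (rule GP_sub[OF \<sigma> gp_subspace])
    fix zs assume zs: "length zs = n" "\<forall>p<n. zs ! p \<in> map (u_of V) js ! \<sigma> p"
    have zsq: "q < n \<Longrightarrow> zs ! q \<in> u_of V (js ! \<sigma> q)" for q
    proof -
      assume q: "q < n"
      have "zs ! q \<in> map (u_of V) js ! \<sigma> q" using zs(2) q by blast
      then show ?thesis using perm_nth_lt[OF \<sigma> q] js(1) by simp
    qed
    have jsB: "q < n \<Longrightarrow> js ! \<sigma> q \<in> idx_set C" for q using js perm_nth_lt[OF \<sigma>] nth_mem by blast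
    have zsL: "set zs \<subseteq> L"
    proof
      fix w assume "w \<in> set zs"
      then obtain q where q: "q < n" "w = zs ! q" using zs(1) by (metis in_set_conv_nth)
      have "js ! \<sigma> q \<in> idx_set B" using jsB[OF q(1)] idx_C_B[OF CB] by blast
      then show "w \<in> L" using u_of_BV BV_L zsq[OF q(1)] q(2) by blast
    qed
    define Q where "Q = {q. q < n \<and> js ! \<sigma> q = None}"
    obtain i where i: "i < n" "js ! i = Some c" using c js(1) by (metis in_set_conv_nth)
    define qc where "qc = inv \<sigma> i"
    have qc: "qc < n" "\<sigma> qc = i" using permutes_in_image[OF permutes_inv[OF \<sigma>]] i(1) permutes_inverses(1)[OF \<sigma>]
      by (auto simp: qc_def)
    have qcQ: "qc \<notin> Q" using qc i by (simp add: Q_def)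
    have cC: "c \<in> C" using i js(2) nth_mem[of i js] js(1) by (auto simp: idx_set_def)
    show "mul zs \<in> gp \<sigma> (map (u_of (VC C)) js)"
    proof (rule MR[OF gp_subspace _ _ zs(1) zsL, of Vga Q])
      show "Vga \<subseteq> L" using Vga_V V_L by blast
      show "Q \<subseteq> {..<n}" by (auto simp: Q_def)
      show "\<forall>r\<in>Q. zs ! r \<in> span Vga"
      proof
        fix r assume "r \<in> Q"
        then have "zs ! r \<in> V" using zsq[of r] by (simp add: Q_def u_of_def)
        then show "zs ! r \<in> span Vga" using V_span by blast
      qed
      fix ys assume ys: "length ys = n" "set ys \<subseteq> L" "\<forall>r<n. r \<notin> Q \<longrightarrow> ys ! r = zs ! r" "\<forall>r\<in>Q. ys ! r \<in> Vga"
      have yc: "ys ! qc = c" using ys(3) qc qcQ zsq[OF qc(1)] i(2) by (simp add: u_of_def)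
      show "mul ys \<in> gp \<sigma> (map (u_of (VC C)) js)"
      proof (cases "\<exists>r\<in>Q. ys ! r \<notin> VC C")
        case True
        then obtain r where r: "r \<in> Q" "ys ! r \<notin> VC C" by blast
        have rn: "r < n" "r \<noteq> qc" using r(1) qcQ by (auto simp: Q_def)
        have "mul ys = 0"
        proof (cases "ys ! r = 0")
          case True then show ?thesis using mul_zero'[OF ys(1,2) rn(1)] by simp
        next
          case False
          then obtain C' where C': "C' \<in> B // E" "ys ! r \<in> VCg C'" using Vga_class ys(4) r(1) by blast
          have "C' \<noteq> C" using C'(2) r(2) unfolding VC_def using span_base by blast
          then show ?thesis
            using Mix[OF C C'(1) _ ys(1,2) qc(1) rn(1) rn(2)[symmetric]] yc cC C_SC VCg_SC C'(2) by blast
        qed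
        then show ?thesis using subspace_0[OF gp_subspace] by simp
      next
        case False
        show ?thesis
        proof (rule GP_mem[OF \<sigma> ys(1)], intro allI impI)
          fix q assume q: "q < n"
          have sq: "\<sigma> q < n" using perm_nth_lt[OF \<sigma> q] .
          show "ys ! q \<in> map (u_of (VC C)) js ! \<sigma> q"
          proof (cases "q \<in> Q")
            case True
            then have "ys ! q \<in> VC C" "js ! \<sigma> q = None" using False by (auto simp: Q_def)
            then show ?thesis using sq js(1) by (simp add: u_of_def)
          next
            case nQ: False
            then obtain b where b: "js ! \<sigma> q = Some b" using q by (auto simp: Q_def)
            have "ys ! q = zs ! q" using ys(3) q nQ by blast
            then have "ys ! q \<in> {b}" using zsq[OF q] b by (simp add: u_of_def)
            then show ?thesis using sq js(1) b by (simp add: u_of_def)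
          qed
        qed
      qed
    qed
  qed
qed

lemma P_SC: assumes C: "C \<in> B // E" and \<sigma>: "\<sigma> permutes {..<n}" and js: "length js = n" "set js \<subseteq> idx_set C" and c: "Some c \<in> set js"
  shows "gp \<sigma> (map (u_of V) js) \<subseteq> SC C"
proof (rule GP_sub[OF \<sigma> SC_subspace])
  have CB: "C \<subseteq> B" using cls_sub[OF C] .
  fix zs assume zs: "length zs = n" "\<forall>p<n. zs ! p \<in> map (u_of V) js ! \<sigma> p"
  have zsq: "q < n \<Longrightarrow> zs ! q \<in> u_of V (js ! \<sigma> q)" for q
  proof -
    assume q: "q < n"
    have "zs ! q \<in> map (u_of V) js ! \<sigma> q" using zs(2) q by blast
    then show ?thesis using perm_nth_lt[OF \<sigma> q] js(1) by simp
  qed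
  have jsB: "q < n \<Longrightarrow> js ! \<sigma> q \<in> idx_set C" for q using js perm_nth_lt[OF \<sigma>] nth_mem by blast
  have zsL: "set zs \<subseteq> L"
  proof
    fix w assume "w \<in> set zs"
    then obtain q where q: "q < n" "w = zs ! q" using zs(1) by (metis in_set_conv_nth)
    have "js ! \<sigma> q \<in> idx_set B" using jsB[OF q(1)] idx_C_B[OF CB] by blast
    then show "w \<in> L" using u_of_BV BV_L zsq[OF q(1)] q(2) by blast
  qed
  obtain i where i: "i < n" "js ! i = Some c" using c js(1) by (metis in_set_conv_nth)
  define qc where "qc = inv \<sigma> i"
  have qc: "qc < n" "\<sigma> qc = i" using permutes_in_image[OF permutes_inv[OF \<sigma>]] i(1) permutes_inverses(1)[OF \<sigma>]
    by (auto simp: qc_def)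
  have cC: "c \<in> C" using i js(2) nth_mem[of i js] js(1) by (auto simp: idx_set_def)
  have "zs ! qc = c" using zsq[OF qc(1)] qc(2) i(2) by (simp add: u_of_def)
  then show "mul zs \<in> SC C" using K[OF C zs(1) zsL qc(1)] cC by simp
qed

lemma amap_eq: assumes C: "C \<in> B // E" and \<sigma>: "\<sigma> permutes {..<n}" and js: "length js = n" "set js \<subseteq> idx_set C" and c: "Some c \<in> set js"
  shows "a_map scale n mul (VC C) C \<sigma> js = a_map scale n mul V B \<sigma> js"
proof -
  have CB: "C \<subseteq> B" using cls_sub[OF C] .
  define P where "P = gp \<sigma> (map (u_of V) js)"
  have PS: "gp \<sigma> (map (u_of (VC C)) js) = P" unfolding P_def by (rule RL[OF C \<sigma> js c])
  have PSC: "P \<subseteq> SC C" unfolding P_def by (rule P_SC[OF C \<sigma> js c])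
  have r_iff: "(r \<in> C \<and> P \<noteq> {0} \<and> P \<subseteq> line scale r) \<longleftrightarrow> (r \<in> B \<and> P \<noteq> {0} \<and> P \<subseteq> line scale r)" for r
  proof
    assume "r \<in> C \<and> P \<noteq> {0} \<and> P \<subseteq> line scale r" then show "r \<in> B \<and> P \<noteq> {0} \<and> P \<subseteq> line scale r" using CB by blast
  next
    assume a: "r \<in> B \<and> P \<noteq> {0} \<and> P \<subseteq> line scale r"
    then have "r \<in> P" using line_sub_in[of P r] unfolding P_def using gp_subspace by blast
    then have "r \<in> C" using SC_B[OF CB] a PSC by blast
    then show "r \<in> C \<and> P \<noteq> {0} \<and> P \<subseteq> line scale r" using a by blast
  qed
  have v_iff: "P \<subseteq> VC C \<longleftrightarrow> P \<subseteq> V" using VC_V SC_V[OF CB] PSC by blast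
  show ?thesis unfolding a_map_def Let_def PS P_def[symmetric] using r_iff v_iff by auto
qed

lemma amap_noNone: assumes e: "e \<in> B" and \<sigma>: "\<sigma> permutes {..<n}" and rest: "length rest = n - 1" "set rest \<subseteq> {None}"
  shows "a_map scale n mul V B \<sigma> (Some e # rest) \<noteq> {None}"
proof
  assume a: "a_map scale n mul V B \<sigma> (Some e # rest) = {None}"
  have l: "length (Some e # rest) = n" using rest(1) n2 by simp
  have s: "set (Some e # rest) \<subseteq> idx_set B" using e rest(2) by (auto simp: idx_set_def)
  have ne: "rest \<noteq> []" using rest(1) n2 by auto
  then have "None \<in> set (Some e # rest)" using rest(2) by (cases rest) auto
  moreover have "\<not> set (Some e # rest) \<subseteq> {None}" by simp
  ultimately obtain e' where e': "e' \<in> B" "gp \<sigma> (map (u_of V) (Some e # rest)) \<subseteq> line scale e'"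
    using Qgen[OF \<sigma> l s] by blast
  have "None \<in> a_map scale n mul V B \<sigma> (Some e # rest)" using a by simp
  then have P: "gp \<sigma> (map (u_of V) (Some e # rest)) \<noteq> {0}" "gp \<sigma> (map (u_of V) (Some e # rest)) \<subseteq> V"
    unfolding a_map_def Let_def by auto
  obtain x where "x \<in> gp \<sigma> (map (u_of V) (Some e # rest))" "x \<noteq> 0" using P(1) gp_subspace subspace_0 by blast
  then show False using P(2) e' line_V by blast
qed

end

context thm44 begin

lemma conv_S: assumes C: "C \<in> B // E" and \<sigma>: "\<sigma> permutes {..<n}" and js: "length js = n" "set js \<subseteq> idx_set C"
  and e: "e \<in> gp \<sigma> (map (u_of V) js)" and c: "\<exists>x. Some x \<in> set js"
  shows "e \<in> gp \<sigma> (map (u_of (VC C)) js)"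
proof -
  obtain x where "Some x \<in> set js" using c by blast
  then show ?thesis using RL[OF C \<sigma> js] e by simp
qed

lemma muqS: assumes C: "C \<in> B // E" shows "mu_quasi_mult scale n mul (VC C) C"
  unfolding mu_quasi_mult_def
proof (intro ballI allI impI)
  have CB: "C \<subseteq> B" using cls_sub[OF C] .
  fix e b1 k1 b2 ks
  assume eC: "e \<in> C" and k1: "k1 \<in> idx_set C" and ks: "set ks \<subseteq> idx_set C" "length ks = n - 1"
    and mu: "Some e \<in> mu_map scale n mul (VC C) C b1 k1 b2 ks"
  have eB: "e \<in> B" using eC CB by blast
  have IB: "idx_set C \<subseteq> idx_set B" using idx_C_B[OF CB] .
  have ljs: "length (k1 # ks) = n" using ks(2) n2 by simp
  have sjs: "set (k1 # ks) \<subseteq> idx_set C" using k1 ks by simp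
  have eIdx: "Some e \<in> idx_set C" "Some e \<in> idx_set B" using eC eB by (auto simp: idx_set_def)
  show "\<exists>\<sigma>. \<sigma> permutes {..<n} \<and> e \<in> gp \<sigma> (map (u_of (VC C)) (k1 # ks))"
  proof (cases b1)
    case False note b1 = this
    show ?thesis
    proof (cases b2)
      case False
      then obtain \<sigma> where \<sigma>: "\<sigma> permutes {..<n}" "Some e \<in> a_map scale n mul (VC C) C \<sigma> (k1 # ks)"
        using mu b1 by (auto simp: mu_map_def)
      then have P: "gp \<sigma> (map (u_of (VC C)) (k1 # ks)) \<noteq> {0}" "gp \<sigma> (map (u_of (VC C)) (k1 # ks)) \<subseteq> line scale e"
        unfolding a_map_def Let_def by auto
      then have "e \<in> gp \<sigma> (map (u_of (VC C)) (k1 # ks))" using line_sub_in gp_subspace by blast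
      then show ?thesis using \<sigma>(1) by blast
    next
      case True
      then obtain \<sigma> where \<sigma>: "\<sigma> permutes {..<n}" "Some e \<in> b_map scale n mul (VC C) C \<sigma> k1 ks"
        using mu b1 by (auto simp: mu_map_def)
      then have aS: "a_map scale n mul (VC C) C \<sigma> (Some e # ks) = {k1}" unfolding b_map_def by blast
      have l2: "length (Some e # ks) = n" "set (Some e # ks) \<subseteq> idx_set C" using ks n2 eIdx by auto
      have aL: "a_map scale n mul V B \<sigma> (Some e # ks) = {k1}"
        using aS amap_eq[OF C \<sigma>(1) l2, of e] by simp
      have "Some e \<in> b_map scale n mul V B \<sigma> k1 ks" unfolding b_map_def using aL eIdx by blast
      then have "Some e \<in> mu_map scale n mul V B False k1 True ks" using \<sigma>(1) by (simp add: mu_map_def) blast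
      then obtain \<sigma>' where \<sigma>': "\<sigma>' permutes {..<n}" "e \<in> gp \<sigma>' (map (u_of V) (k1 # ks))"
        using muqD[OF eB, of k1 ks] k1 ks IB by blast
      show ?thesis
      proof (cases "\<exists>x. Some x \<in> set (k1 # ks)")
        case True then show ?thesis using conv_S[OF C \<sigma>'(1) ljs sjs \<sigma>'(2)] \<sigma>'(1) by blast
      next
        case False
        then have "k1 = None" "set ks \<subseteq> {None}" by (auto, metis not_None_eq) (metis not_None_eq subsetI singletonI)
        then show ?thesis using amap_noNone[OF eB \<sigma>(1) ks(2)] aL by simp
      qed
    qed
  next
    case True note b1 = this
    show ?thesis
    proof (cases b2)
      case True then show ?thesis using mu b1 by (simp add: mu_map_def)
    next
      case False
      then obtain k \<sigma> where k\<sigma>: "k < n - 1" "\<sigma> permutes {..<n}"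
        "Some e \<in> b_map scale n mul (VC C) C \<sigma> (ks ! k) (k1 # take k ks @ drop (Suc k) ks)"
        using mu b1 by (auto simp: mu_map_def)
      define ks2 where "ks2 = k1 # take k ks @ drop (Suc k) ks"
      have aS: "a_map scale n mul (VC C) C \<sigma> (Some e # ks2) = {ks ! k}" using k\<sigma>(3) unfolding b_map_def ks2_def by blast
      have lks2: "length ks2 = n - 1" using ks(2) k\<sigma>(1) n2 by (simp add: ks2_def)
      have sks2: "set ks2 \<subseteq> set (k1 # ks)" unfolding ks2_def using del_set[of k ks] by auto
      have l2: "length (Some e # ks2) = n" "set (Some e # ks2) \<subseteq> idx_set C" using lks2 n2 eIdx sks2 sjs by auto
      have aL: "a_map scale n mul V B \<sigma> (Some e # ks2) = {ks ! k}"
        using aS amap_eq[OF C k\<sigma>(2) l2, of e] by simp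
      have "Some e \<in> b_map scale n mul V B \<sigma> (ks ! k) ks2" unfolding b_map_def using aL eIdx by blast
      then have "Some e \<in> mu_map scale n mul V B True k1 False ks"
        using k\<sigma>(1,2) unfolding ks2_def by (simp add: mu_map_def) blast
      then obtain \<sigma>' where \<sigma>': "\<sigma>' permutes {..<n}" "e \<in> gp \<sigma>' (map (u_of V) (k1 # ks))"
        using muqD[OF eB, of k1 ks] k1 ks IB by blast
      show ?thesis
      proof (cases "\<exists>x. Some x \<in> set (k1 # ks)")
        case True then show ?thesis using conv_S[OF C \<sigma>'(1) ljs sjs \<sigma>'(2)] \<sigma>'(1) by blast
      next
        case False
        then have n1: "\<forall>j\<in>set (k1 # ks). j = None" by (metis not_None_eq)
        then have "set ks2 \<subseteq> {None}" using sks2 by blast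
        moreover have "ks ! k = None" using n1 k\<sigma>(1) ks(2) by simp
        ultimately show ?thesis using amap_noNone[OF eB k\<sigma>(2) lks2] aL by simp
      qed
    qed
  qed
qed

end

context thm44 begin

lemma SC_graded: assumes "C \<subseteq> B" shows "graded_subspace scale Lg (SC C)"
proof (rule graded_of_gens[OF SC_span])
  show "\<forall>x\<in>C \<union> VCg C. \<exists>g. x \<in> Lg g" using B_hom assms hom_VCg[OF _ assms] by blast
qed

lemma VC_graded: assumes "C \<subseteq> B" shows "graded_subspace scale Lg (VC C)"
  by (rule graded_of_gens[OF VC_def]) (use hom_VCg[OF _ assms] in blast)

lemma idealS: assumes C: "C \<in> B // E" shows "gLt_ideal scale n mul L Lg (SC C)"
  unfolding gLt_ideal_def
proof (intro conjI allI impI)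
  have CB: "C \<subseteq> B" using cls_sub[OF C] .
  show "SC C \<subseteq> L" using SC_L[OF CB] .
  show "graded_subspace scale Lg (SC C)" using SC_graded[OF CB] .
  fix \<sigma> :: "nat \<Rightarrow> nat" assume \<sigma>: "\<sigma> permutes {..<n}"
  show "gp \<sigma> (SC C # replicate (n - 1) L) \<subseteq> SC C"
  proof (rule GP_sub[OF \<sigma> SC_subspace])
    fix zs assume zs: "length zs = n" "\<forall>p<n. zs ! p \<in> (SC C # replicate (n - 1) L) ! \<sigma> p"
    note P = pos0[OF \<sigma> zs(2)]
    have "set zs \<subseteq> L"
    proof
      fix w assume "w \<in> set zs"
      then obtain q where q: "q < n" "w = zs ! q" using zs(1) by (metis in_set_conv_nth)
      show "w \<in> L"
      proof (cases "q = inv \<sigma> 0")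
        case True then show ?thesis using P(2) q SC_L[OF CB] by blast
      next
        case False then show ?thesis using P(3)[OF q(1)] q by blast
      qed
    qed
    then show "mul zs \<in> SC C" using IdealGen[OF C zs(1) _ P(1,2)] by blast
  qed
qed

lemma VC_spanC: assumes "C \<subseteq> B" shows "VC C \<inter> span C = {0}"
proof -
  have "VC C \<inter> span C \<subseteq> V \<inter> span B" using VC_V span_mono[OF assms] by blast
  moreover have "0 \<in> VC C \<inter> span C" using subspace_0[OF VC_subspace] span_zero by blast
  ultimately show ?thesis using VB0 by blast
qed

lemma inhS: assumes C: "C \<in> B // E" shows "inherited_basis scale Lg V B (SC C) (VC C) C"
  unfolding inherited_basis_def
proof (intro conjI)
  have CB: "C \<subseteq> B" using cls_sub[OF C] .
  show "VC C \<subseteq> V" by (rule VC_V)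
  show "graded_subspace scale Lg (VC C)" by (rule VC_graded[OF CB])
  show "C \<subseteq> B" by (rule CB)
  show "C \<noteq> {}" by (rule cls_ne[OF C])
  show "VC C \<inter> span C = {0}" by (rule VC_spanC[OF CB])
  show "SC C = setsum (VC C) (span C)" by (rule SC_def)
qed

lemma qmbS: assumes C: "C \<in> B // E" shows "quasi_mult_basis scale n mul (SC C) Lg (VC C) C"
  unfolding quasi_mult_basis_def
proof (intro conjI)
  have CB: "C \<subseteq> B" using cls_sub[OF C] .
  obtain c0 where c0: "c0 \<in> C" using cls_ne[OF C] by blast
  have c0line: "0 \<in> line scale c0" by (auto simp: line_mem intro: exI[of _ 0])
  have VCL: "VC C \<subseteq> L" using VC_V V_L by blast
  have CL: "C \<subseteq> L" using CB B_L by blast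
  show "VC C \<subseteq> SC C" by (rule VC_SC)
  show "graded_subspace scale Lg (VC C)" by (rule VC_graded[OF CB])
  show "C \<subseteq> SC C" by (rule C_SC)
  show "C \<noteq> {}" by (rule cls_ne[OF C])
  show "independent C" using independent_mono[OF B_ind CB] .
  show "\<forall>e\<in>C. \<exists>g. e \<in> Lg g" using B_hom CB by blast
  show "SC C = setsum (VC C) (span C)" by (rule SC_def)
  show "VC C \<inter> span C = {0}" by (rule VC_spanC[OF CB])
  show "\<forall>es. length es = n \<longrightarrow> set es \<subseteq> C \<longrightarrow> (\<exists>e\<in>C. mul es \<in> line scale e) \<or> mul es \<in> VC C"
  proof (intro allI impI)
    fix es assume es: "length es = n" "set es \<subseteq> C"
    have esB: "set es \<subseteq> B" using es(2) CB by blast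
    have "(\<exists>e\<in>B. mul es \<in> line scale e) \<or> mul es \<in> V" using cond1 es(1) esB by blast
    then show "(\<exists>e\<in>C. mul es \<in> line scale e) \<or> mul es \<in> VC C"
    proof
      assume "\<exists>e\<in>B. mul es \<in> line scale e"
      then obtain e s where e: "e \<in> B" "mul es = s *s e" by (auto simp: line_mem)
      show ?thesis
      proof (cases "s = 0")
        case True then show ?thesis using e c0 c0line by auto
      next
        case False
        have n0: "0 < n" using n2 by simp
        have "es ! 0 \<in> C" using es n0 nth_mem by blast
        moreover have "set es \<subseteq> L" using es(2) CL by blast
        ultimately have "mul es \<in> SC C" using K[OF C es(1) _ n0] by blast
        then have "e \<in> SC C" using scale_in_sub[OF SC_subspace _ False] e(2) by simp
        then have "e \<in> C" using SC_B[OF CB e(1)] by blast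
        then show ?thesis using e(2) by (auto simp: line_mem)
      qed
    next
      assume "mul es \<in> V"
      then have "mul es \<in> VCg C" unfolding VCg_def using es by blast
      then show ?thesis unfolding VC_def using span_base by blast
    qed
  qed
  show "\<forall>k es \<sigma>. 0 < k \<longrightarrow> k < n \<longrightarrow> length es = k \<longrightarrow> set es \<subseteq> C \<longrightarrow> \<sigma> permutes {..<n} \<longrightarrow>
         (\<exists>e\<in>C. gp \<sigma> (map (\<lambda>x. {x}) es @ replicate (n - k) (VC C)) \<subseteq> line scale e)"
  proof (intro allI impI)
    fix k es \<sigma> assume k: "0 < k" "k < n" and es: "length es = k" "set es \<subseteq> C" and \<sigma>: "\<sigma> permutes {..<n}"
    have esB: "set es \<subseteq> B" using es(2) CB by blast
    obtain e where e: "e \<in> B" "gp \<sigma> (map (\<lambda>x. {x}) es @ replicate (n - k) V) \<subseteq> line scale e"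
      using cond2 k es(1) esB \<sigma> by blast
    define As where "As = map (\<lambda>x. {x}) es @ replicate (n - k) (VC C)"
    have sub: "gp \<sigma> As \<subseteq> gp \<sigma> (map (\<lambda>x. {x}) es @ replicate (n - k) V)"
    proof (rule gp_mono[OF \<sigma>], intro allI impI)
      fix r assume "r < n"
      then show "As ! r \<subseteq> (map (\<lambda>x. {x}) es @ replicate (n - k) V) ! r"
        using VC_V es(1) by (cases "r < k") (auto simp: As_def nth_append)
    qed
    have AsL: "j < n \<Longrightarrow> As ! j \<subseteq> L" for j
    proof (cases "j < k")
      case True
      then have "es ! j \<in> L" using es nth_mem[of j es] CL by blast
      then show ?thesis using True es(1) by (auto simp: As_def nth_append)
    next
      case False
      assume "j < n" then show ?thesis using False es(1) VCL by (auto simp: As_def nth_append)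
    qed
    have PSC: "gp \<sigma> As \<subseteq> SC C"
    proof (rule GP_sub[OF \<sigma> SC_subspace])
      fix zs assume zs: "length zs = n" "\<forall>p<n. zs ! p \<in> As ! \<sigma> p"
      have q0: "inv \<sigma> 0 < n" "\<sigma> (inv \<sigma> 0) = 0" using permutes_in_image[OF permutes_inv[OF \<sigma>]] n2 permutes_inverses(1)[OF \<sigma>] by auto
      have "zs ! inv \<sigma> 0 \<in> As ! 0" using zs(2) q0 by metis
      then have z0: "zs ! inv \<sigma> 0 \<in> C" using k(1) es nth_mem[of 0 es] by (auto simp: As_def nth_append)
      have "set zs \<subseteq> L"
      proof
        fix w assume "w \<in> set zs"
        then obtain q where q: "q < n" "w = zs ! q" using zs(1) by (metis in_set_conv_nth)
        then show "w \<in> L" using zs(2) AsL[OF perm_nth_lt[OF \<sigma> q(1)]] by blast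
      qed
      then show "mul zs \<in> SC C" using K[OF C zs(1) _ q0(1) z0] by blast
    qed
    show "\<exists>e\<in>C. gp \<sigma> (map (\<lambda>x. {x}) es @ replicate (n - k) (VC C)) \<subseteq> line scale e"
    proof (cases "gp \<sigma> As = {0}")
      case True then show ?thesis using c0 c0line unfolding As_def by auto
    next
      case False
      have Pe: "gp \<sigma> As \<subseteq> line scale e" using sub e(2) by blast
      then have "e \<in> gp \<sigma> As" using line_sub_in[OF gp_subspace _ False] by blast
      then have "e \<in> C" using PSC SC_B[OF CB e(1)] by blast
      then show ?thesis using Pe unfolding As_def by blast
    qed
  qed
  show "(\<exists>e\<in>C. gp id (replicate n (VC C)) \<subseteq> line scale e) \<or> gp id (replicate n (VC C)) \<subseteq> VC C"
  proof -
    have sub: "gp id (replicate n (VC C)) \<subseteq> gp id (replicate n V)"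
      by (rule gp_mono[OF permutes_id]) (use VC_V in auto)
    have PSC: "gp id (replicate n (VC C)) \<subseteq> SC C"
    proof (rule GP_sub[OF permutes_id SC_subspace])
      fix zs assume zs: "length zs = n" "\<forall>p<n. zs ! p \<in> replicate n (VC C) ! id p"
      have n0: "0 < n" using n2 by simp
      have "set zs \<subseteq> VC C"
      proof
        fix w assume "w \<in> set zs"
        then obtain q where q: "q < n" "w = zs ! q" using zs(1) by (metis in_set_conv_nth)
        then show "w \<in> VC C" using zs(2) by simp
      qed
      then have zL: "set zs \<subseteq> L" using VCL by blast
      have "zs ! 0 \<in> SC C" using zs(2) n0 VC_SC by auto
      then show "mul zs \<in> SC C" using IdealGen[OF C zs(1) zL n0] by blast
    qed
    from cond3 show ?thesis
    proof
      assume "\<exists>e\<in>B. gp id (replicate n V) \<subseteq> line scale e"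
      then obtain e where e: "e \<in> B" "gp id (replicate n V) \<subseteq> line scale e" by blast
      show ?thesis
      proof (cases "gp id (replicate n (VC C)) = {0}")
        case True then show ?thesis using c0 c0line by auto
      next
        case False
        have Pe: "gp id (replicate n (VC C)) \<subseteq> line scale e" using sub e(2) by blast
        then have "e \<in> gp id (replicate n (VC C))" using line_sub_in[OF gp_subspace _ False] by blast
        then have "e \<in> C" using PSC SC_B[OF CB e(1)] by blast
        then show ?thesis using Pe by blast
      qed
    next
      assume "gp id (replicate n V) \<subseteq> V"
      then have "gp id (replicate n (VC C)) \<subseteq> VC C" using sub PSC SC_V[OF CB] by blast
      then show ?thesis by blast
    qed
  qed
qed

end

context thm44 begin

lemma mul_sum: assumes fin: "finite S" and ys: "length ys = n" "set ys \<subseteq> L" and q: "q < n" and f: "\<forall>t\<in>S. f t \<in> L"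
  shows "mul (ys[q := (\<Sum>t\<in>S. f t)]) = (\<Sum>t\<in>S. mul (ys[q := f t]))"
  using fin f
proof (induction S rule: finite_induct)
  case empty
  then show ?case using mul_zero[OF ys q] by simp
next
  case (insert a S)
  have sL: "(\<Sum>t\<in>S. f t) \<in> L" using insert.prems by (intro subspace_sum[OF L_subspace]) auto
  have aL: "f a \<in> L" using insert.prems by simp
  have "mul (ys[q := (\<Sum>t\<in>insert a S. f t)]) = mul (ys[q := f a + (\<Sum>t\<in>S. f t)])"
    using insert.hyps by simp
  also have "\<dots> = mul (ys[q := f a]) + mul (ys[q := (\<Sum>t\<in>S. f t)])" using mul_add[OF ys q aL sL] .
  also have "mul (ys[q := (\<Sum>t\<in>S. f t)]) = (\<Sum>t\<in>S. mul (ys[q := f t]))" using insert.IH insert.prems by simp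
  finally show ?case using insert.hyps by simp
qed

definition Fam where "Fam = (\<lambda>C. (SC C, VC C, C)) ` (B // E)"

lemma Fam_span: "L = span (\<Union>t\<in>Fam. fst t)"
proof -
  have "(\<Union>t\<in>Fam. fst t) = Gall" unfolding Fam_def Gall_def by auto
  moreover have "span Gall = L"
    using L_span_Gall span_minimal[OF Gall_L L_subspace] by blast
  ultimately show ?thesis by simp
qed

lemma Fam_indep: assumes fin: "finite T" and TF: "T \<subseteq> Fam" and x: "\<forall>t\<in>T. x t \<in> fst t" and s0: "sum x T = 0"
  shows "\<forall>t\<in>T. x t = 0"
proof -
  define cl where "cl t = snd (snd t)" for t :: "'v set \<times> 'v set \<times> 'v set"
  have clC: "t \<in> T \<Longrightarrow> cl t \<in> B // E" for t using TF unfolding Fam_def cl_def by auto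
  have tform: "t \<in> T \<Longrightarrow> t = (SC (cl t), VC (cl t), cl t)" for t using TF unfolding Fam_def cl_def by auto
  have clinj: "t \<in> T \<Longrightarrow> t' \<in> T \<Longrightarrow> t \<noteq> t' \<Longrightarrow> cl t \<noteq> cl t'" for t t' using tform by metis
  have clB: "t \<in> T \<Longrightarrow> cl t \<subseteq> B" for t using cls_sub clC by blast
  have xS: "t \<in> T \<Longrightarrow> x t \<in> SC (cl t)" for t using x tform by (metis fst_conv)
  have "\<forall>t\<in>T. \<exists>p. x t = fst p + snd p \<and> fst p \<in> VC (cl t) \<and> snd p \<in> span (cl t)"
  proof
    fix t assume "t \<in> T"
    then obtain a b where "x t = a + b" "a \<in> VC (cl t)" "b \<in> span (cl t)" using xS unfolding SC_def setsum_def by blast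
    then show "\<exists>p. x t = fst p + snd p \<and> fst p \<in> VC (cl t) \<and> snd p \<in> span (cl t)" by (intro exI[of _ "(a, b)"]) simp
  qed
  then obtain f where f: "\<forall>t\<in>T. x t = fst (f t) + snd (f t) \<and> fst (f t) \<in> VC (cl t) \<and> snd (f t) \<in> span (cl t)"
    by (metis bchoice)
  define v where "v t = fst (f t)" for t
  define w where "w t = snd (f t)" for t
  have xvw: "t \<in> T \<Longrightarrow> x t = v t + w t" and vV: "t \<in> T \<Longrightarrow> v t \<in> VC (cl t)" and wS: "t \<in> T \<Longrightarrow> w t \<in> span (cl t)" for t
    using f unfolding v_def w_def by auto
  have sum_vw: "sum v T + sum w T = 0" using s0 xvw by (simp add: sum.distrib[symmetric])
  have sv: "sum v T \<in> V" using vV VC_V by (intro subspace_sum[OF V_subspace]) blast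
  have sw: "sum w T \<in> span B"
  proof (intro span_sum)
    fix t assume "t \<in> T"
    then show "w t \<in> span B" using wS span_mono[OF clB] by blast
  qed
  have "sum w T = - sum v T" using sum_vw by (simp add: eq_neg_iff_add_eq_0 add.commute)
  then have "sum w T \<in> V" using subspace_neg[OF V_subspace sv] by simp
  then have sw0: "sum w T = 0" using sw VB0 by blast
  then have sv0: "sum v T = 0" using sum_vw by simp
  have w0: "w t0 = 0" if t0: "t0 \<in> T" for t0
  proof -
    have "sum w T = w t0 + sum w (T - {t0})" using sum.remove[OF fin t0] .
    then have "w t0 = - sum w (T - {t0})" using sw0 by (simp add: eq_neg_iff_add_eq_0)
    moreover have "sum w (T - {t0}) \<in> span (\<Union>t\<in>T - {t0}. cl t)"
    proof (intro span_sum)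
      fix t assume "t \<in> T - {t0}"
      then show "w t \<in> span (\<Union>t\<in>T - {t0}. cl t)" using wS span_mono[of "cl t" "\<Union>t\<in>T - {t0}. cl t"] by blast
    qed
    ultimately have a: "w t0 \<in> span (\<Union>t\<in>T - {t0}. cl t)" using span_neg by metis
    have dis: "cl t0 \<inter> (\<Union>t\<in>T - {t0}. cl t) = {}"
    proof -
      have "cl t0 \<inter> cl t = {}" if "t \<in> T - {t0}" for t
        using cls_disj[OF clC[OF t0] clC clinj[OF t0]] that by blast
      then show ?thesis by blast
    qed
    have "(\<Union>t\<in>T - {t0}. cl t) \<subseteq> B" using clB by blast
    then show "w t0 = 0" using span_disjoint[OF clB[OF t0] _ dis wS[OF t0] a] by blast
  qed
  have v0: "v t0 = 0" if t0: "t0 \<in> T" for t0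
  proof -
    define C0 where "C0 = cl t0"
    have C0: "C0 \<in> B // E" using clC[OF t0] by (simp add: C0_def)
    have vSC: "t \<in> T \<Longrightarrow> v t \<in> SC (cl t)" for t using vV VC_SC by blast
    have vL: "t \<in> T \<Longrightarrow> v t \<in> L" for t using vV VC_V V_L by blast
    have "v t0 \<in> center scale n mul L"
      unfolding center_def
    proof (intro CollectI conjI allI impI)
      show "v t0 \<in> L" using vL[OF t0] .
      fix \<sigma> :: "nat \<Rightarrow> nat" assume \<sigma>: "\<sigma> permutes {..<n}"
      have "gp \<sigma> ({v t0} # replicate (n - 1) L) \<subseteq> {0}"
      proof (rule GP_sub[OF \<sigma> subspace_single_0])
        fix zs assume zs: "length zs = n" "\<forall>p<n. zs ! p \<in> ({v t0} # replicate (n - 1) L) ! \<sigma> p"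
        note P = pos0[OF \<sigma> zs(2)]
        define q0 where "q0 = inv \<sigma> 0"
        have q0: "q0 < n" "zs ! q0 = v t0" using P(1,2) by (auto simp: q0_def)
        have zsL: "set zs \<subseteq> L"
        proof
          fix y assume "y \<in> set zs"
          then obtain q where q: "q < n" "y = zs ! q" using zs(1) by (metis in_set_conv_nth)
          show "y \<in> L"
          proof (cases "q = q0")
            case True then show ?thesis using q q0 vL[OF t0] by simp
          next
            case False then show ?thesis using P(3)[OF q(1)] q by (simp add: q0_def)
          qed
        qed
        show "mul zs \<in> {0}"
        proof (rule MR[OF subspace_single_0 Gall_L, of "{..<n} - {q0}"])
          show "{..<n} - {q0} \<subseteq> {..<n}" "length zs = n" "set zs \<subseteq> L" using zs zsL by auto
          show "\<forall>r\<in>{..<n} - {q0}. zs ! r \<in> span Gall"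
          proof
            fix r assume "r \<in> {..<n} - {q0}"
            then have "zs ! r \<in> L" using zs(1) zsL nth_mem by fastforce
            then show "zs ! r \<in> span Gall" using L_span_Gall by blast
          qed
          fix ys assume ys: "length ys = n" "set ys \<subseteq> L" "\<forall>r<n. r \<notin> {..<n} - {q0} \<longrightarrow> ys ! r = zs ! r" "\<forall>r\<in>{..<n} - {q0}. ys ! r \<in> Gall"
          have yq: "ys ! q0 = v t0" using ys(3) q0 by simp
          show "mul ys \<in> {0}"
          proof (cases "\<exists>r<n. r \<noteq> q0 \<and> ys ! r \<notin> SC C0")
            case True
            then obtain r where r: "r < n" "r \<noteq> q0" "ys ! r \<notin> SC C0" by blast
            then have "ys ! r \<in> Gall" using ys(4) by blast
            then obtain C' where C': "C' \<in> B // E" "ys ! r \<in> SC C'" unfolding Gall_def by blast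
            have "C' \<noteq> C0" using r(3) C'(2) by blast
            then have "mul ys = 0" using Mix[OF C0 C'(1) _ ys(1,2) q0(1) r(1) r(2)[symmetric]] yq vSC[OF t0] C'(2)
              by (simp add: C0_def)
            then show ?thesis by simp
          next
            case False
            then have o: "\<And>r. r < n \<Longrightarrow> r \<noteq> q0 \<Longrightarrow> ys ! r \<in> SC C0" by blast
            define r1 :: nat where "r1 = (if q0 = 0 then 1 else 0)"
            have r1: "r1 < n" "r1 \<noteq> q0" using n2 q0(1) by (auto simp: r1_def)
            have others: "mul (ys[q0 := v t]) = 0" if t: "t \<in> T - {t0}" for t
            proof -
              have tT: "t \<in> T" "t \<noteq> t0" using t by auto
              have ne: "cl t \<noteq> C0" using clinj[OF tT(1) t0 tT(2)] by (simp add: C0_def)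
              have l: "length (ys[q0 := v t]) = n" "set (ys[q0 := v t]) \<subseteq> L" using ys(1) set_upd_L[OF ys(2) vL[OF tT(1)]] by auto
              have "ys[q0 := v t] ! q0 = v t" "ys[q0 := v t] ! r1 = ys ! r1" using ys(1) q0(1) r1(2) by auto
              then show ?thesis
                using Mix[OF clC[OF tT(1)] C0 ne l q0(1) r1(1) r1(2)[symmetric]] vSC[OF tT(1)] o[OF r1] by simp
            qed
            have "mul (ys[q0 := sum v T]) = (\<Sum>t\<in>T. mul (ys[q0 := v t]))"
              using mul_sum[OF fin ys(1,2) q0(1)] vL by blast
            also have "\<dots> = mul (ys[q0 := v t0]) + (\<Sum>t\<in>T - {t0}. mul (ys[q0 := v t]))"
              using sum.remove[OF fin t0] .
            also have "(\<Sum>t\<in>T - {t0}. mul (ys[q0 := v t])) = 0" using others by simp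
            also have "ys[q0 := v t0] = ys" using yq list_update_id[of ys q0] by simp
            finally have "mul ys = mul (ys[q0 := sum v T])" by simp
            also have "\<dots> = 0" using sv0 mul_zero[OF ys(1,2) q0(1)] by simp
            finally show ?thesis by simp
          qed
        qed
      qed
      moreover have "0 \<in> gp \<sigma> ({v t0} # replicate (n - 1) L)" using subspace_0[OF gp_subspace] .
      ultimately show "gp \<sigma> ({v t0} # replicate (n - 1) L) = {0}" by blast
    qed
    then show ?thesis using cent by simp
  qed
  show ?thesis using xvw w0 v0 by simp
qed

lemma Fam_dsum: "is_direct_sum scale L Fam"
  unfolding is_direct_sum_def using Fam_span Fam_indep by blast

lemma main: "\<exists>Fam :: ('v set \<times> 'v set \<times> 'v set) set.
           is_direct_sum scale L Fam \<and>
           (\<forall>(S, VS, BS) \<in> Fam.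
              gLt_ideal scale n mul L Lg S \<and>
              inherited_basis scale Lg V B S VS BS \<and>
              quasi_mult_basis scale n mul S Lg VS BS \<and>
              minimal_alg scale n mul S Lg VS BS \<and>
              mu_quasi_mult scale n mul VS BS)"
proof (intro exI[of _ Fam] conjI)
  show "is_direct_sum scale L Fam" by (rule Fam_dsum)
  show "\<forall>(S, VS, BS) \<in> Fam.
              gLt_ideal scale n mul L Lg S \<and>
              inherited_basis scale Lg V B S VS BS \<and>
              quasi_mult_basis scale n mul S Lg VS BS \<and>
              minimal_alg scale n mul S Lg VS BS \<and>
              mu_quasi_mult scale n mul VS BS"
    unfolding Fam_def using idealS inhS qmbS minimal muqS by auto
qed

end

theorem theorem4p4:
  fixes scale :: "'f::field \<Rightarrow> 'v::ab_group_add \<Rightarrow> 'v"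
    and n :: nat
    and mul :: "'v list \<Rightarrow> 'v"
    and eps :: "'g::ab_group_add \<Rightarrow> 'g \<Rightarrow> 'f"
    and L V B :: "'v set"
    and Lg :: "'g \<Rightarrow> 'v set"
  assumes "vector_space scale"
    and "n \<ge> 2"
    and "bicharacter eps"
    and "color_gLt_algebra scale n mul eps L Lg"
    and "quasi_mult_basis scale n mul L Lg V B"
    and "mu_quasi_mult scale n mul V B"
    and "center scale n mul L = {0}"
    and "tight scale n mul V B"
  shows "\<exists>Fam :: ('v set \<times> 'v set \<times> 'v set) set.
           is_direct_sum scale L Fam \<and>
           (\<forall>(S, VS, BS) \<in> Fam.
              gLt_ideal scale n mul L Lg S \<and>
              inherited_basis scale Lg V B S VS BS \<and>
              quasi_mult_basis scale n mul S Lg VS BS \<and>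
              minimal_alg scale n mul S Lg VS BS \<and>
              mu_quasi_mult scale n mul VS BS)"
proof -
  have "thm44 scale n mul eps L V B Lg"
    unfolding thm44_def thm44_axioms_def using assms by blast
  then interpret thm44 scale n mul eps L V B Lg .
  show ?thesis by (rule main)
qed

end
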